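(* Fix $\alpha,m,\tau,k,\gamma>0$ and define for $\lambda>0$ $$\varphi(\lambda)=\frac{\alpha}{2m}\cdot\frac{1}{1+\dfrac{\gamma\tau\lambda+k}{\gamma\lambda(\gamma\tau\lambda+k)+k^2m\lambda}},$$ so that $\|H_{\mathrm{DAPI}}\|_2^2=\sum_{n=2}^N\varphi(\lambda_n)$ where $\lambda_2,\dots,\lambda_N$ are the nonzero eigenvalues of $L_B$. Then $\varphi$ is strictly increasing on $(0,\infty)$. Consequently, if $\mathcal G,\mathcal G'$ are connected graphs on $N$ nodes whose weighted Laplacians have ordered eigenvalues satisfying $\lambda_n\le\lambda_n'$ for all $n$, then $\|H_{\mathrm{DAPI}}\|_2^2$ for $\mathcal G$ is at most that for $\mathcal G'$, whereas $\|H_{\mathrm{std}}\|_2^2=\frac{\alpha}{2m}(N-1)$ does not depend on the graph.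
   Context: $H_{\mathrm{std}}$ and $H_{\mathrm{DAPI}}$ are the linear systems: $H_{\mathrm{std}}$: $\dot\theta=\omega$, $\dot\omega=-\tfrac m\tau L_B\theta-\tfrac1\tau\omega+\tfrac1\tau w$, $y=L_G^{1/2}\theta$; $H_{\mathrm{DAPI}}$: $\dot\theta=\omega$, $\dot\omega=-\tfrac m\tau L_B\theta-\tfrac1\tau\omega+\tfrac1\tau\Omega+\tfrac1\tau w$, $\dot\Omega=-\tfrac1k\omega-\tfrac1k\gamma L_B\Omega$, $y=L_G^{1/2}\theta$, with $L_B$ the weighted Laplacian of a connected graph with positive edge weights and $L_G=\alpha L_B$. $\|H\|_2^2:=\int_0^\infty\operatorname{tr}(Ce^{At}BB^Te^{A^Tt}C^T)\,dt$. *)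

theory Defs
  imports "HOL-Analysis.Analysis"
begin

definition weighted_connected_graph :: "real^'n^'n \<Rightarrow> bool" where
  "weighted_connected_graph W \<longleftrightarrow>
     (\<forall>i j. W$i$j = W$j$i) \<and> (\<forall>i j. W$i$j \<ge> 0) \<and> (\<forall>i. W$i$i = 0) \<and>
     (\<forall>i j. (i, j) \<in> {(a, b). W$a$b > 0}\<^sup>*)"

definition laplacian :: "real^'n^'n \<Rightarrow> real^'n^'n" where
  "laplacian W = (\<chi> i j. if i = j then (\<Sum>k\<in>UNIV - {i}. W$i$k) else - W$i$j)"

definition ordered_eigenvalues :: "real^'n^'n \<Rightarrow> (nat \<Rightarrow> real) \<Rightarrow> bool" where
  "ordered_eigenvalues M lam \<longleftrightarrow>
     (\<forall>i j. 1 \<le> i \<longrightarrow> i \<le> j \<longrightarrow> j \<le> CARD('n) \<longrightarrow> lam i \<le> lam j) \<and>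
     (\<exists>v :: nat \<Rightarrow> real^'n.
        (\<forall>i\<in>{1..CARD('n)}. \<forall>j\<in>{1..CARD('n)}. v i \<bullet> v j = (if i = j then 1 else 0)) \<and>
        (\<forall>i\<in>{1..CARD('n)}. M *v v i = lam i *\<^sub>R v i))"

definition psd_sqrt :: "real^'n^'n \<Rightarrow> real^'n^'n" where
  "psd_sqrt M = (THE S. transpose S = S \<and> (\<forall>x. x \<bullet> (S *v x) \<ge> 0) \<and> S ** S = M)"

definition blin_pow :: "('a::real_normed_vector \<Rightarrow>\<^sub>L 'a) \<Rightarrow> nat \<Rightarrow> ('a \<Rightarrow>\<^sub>L 'a)" where
  "blin_pow M n = ((\<lambda>X. M o\<^sub>L X) ^^ n) id_blinfun"

definition blin_exp :: "('a::real_normed_vector \<Rightarrow>\<^sub>L 'a) \<Rightarrow> ('a \<Rightarrow>\<^sub>L 'a)" where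
  "blin_exp M = (\<Sum>n. (1 / fact n) *\<^sub>R blin_pow M n)"

definition lin_trace :: "('a::euclidean_space \<Rightarrow> 'a) \<Rightarrow> real" where
  "lin_trace f = (\<Sum>b\<in>Basis. b \<bullet> f b)"

definition H2_sq :: "('s::euclidean_space \<Rightarrow>\<^sub>L 's) \<Rightarrow> ('u::euclidean_space \<Rightarrow>\<^sub>L 's)
    \<Rightarrow> ('s \<Rightarrow>\<^sub>L 'y::euclidean_space) \<Rightarrow> real" where
  "H2_sq A B C = integral {0..}
     (\<lambda>t. lin_trace (blinfun_apply (C o\<^sub>L blin_exp (t *\<^sub>R A) o\<^sub>L B)
                     \<circ> adjoint (blinfun_apply (C o\<^sub>L blin_exp (t *\<^sub>R A) o\<^sub>L B))))"

definition A_std :: "real^'n^'n \<Rightarrow> real \<Rightarrow> real \<Rightarrow> ((real^'n) \<times> (real^'n)) \<Rightarrow>\<^sub>L ((real^'n) \<times> (real^'n))" where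
  "A_std L m \<tau> = Blinfun (\<lambda>(\<theta>, \<omega>). (\<omega>, - (m / \<tau>) *\<^sub>R (L *v \<theta>) - (1 / \<tau>) *\<^sub>R \<omega>))"
definition B_std :: "real \<Rightarrow> (real^'n) \<Rightarrow>\<^sub>L ((real^'n) \<times> (real^'n))" where
  "B_std \<tau> = Blinfun (\<lambda>w. (0, (1 / \<tau>) *\<^sub>R w))"
definition C_std :: "real^'n^'n \<Rightarrow> ((real^'n) \<times> (real^'n)) \<Rightarrow>\<^sub>L (real^'n)" where
  "C_std S = Blinfun (\<lambda>(\<theta>, \<omega>). S *v \<theta>)"

definition H2sq_std :: "real^'n^'n \<Rightarrow> real \<Rightarrow> real \<Rightarrow> real \<Rightarrow> real" where
  "H2sq_std W \<alpha> m \<tau> =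
     H2_sq (A_std (laplacian W) m \<tau>) (B_std \<tau>) (C_std (psd_sqrt (\<alpha> *\<^sub>R laplacian W)))"

definition A_dapi :: "real^'n^'n \<Rightarrow> real \<Rightarrow> real \<Rightarrow> real \<Rightarrow> real \<Rightarrow>
    ((real^'n) \<times> (real^'n) \<times> (real^'n)) \<Rightarrow>\<^sub>L ((real^'n) \<times> (real^'n) \<times> (real^'n))" where
  "A_dapi L m \<tau> k \<gamma> = Blinfun (\<lambda>(\<theta>, \<omega>, \<Omega>).
     (\<omega>,
      - (m / \<tau>) *\<^sub>R (L *v \<theta>) - (1 / \<tau>) *\<^sub>R \<omega> + (1 / \<tau>) *\<^sub>R \<Omega>,
      - (1 / k) *\<^sub>R \<omega> - (\<gamma> / k) *\<^sub>R (L *v \<Omega>)))"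
definition B_dapi :: "real \<Rightarrow> (real^'n) \<Rightarrow>\<^sub>L ((real^'n) \<times> (real^'n) \<times> (real^'n))" where
  "B_dapi \<tau> = Blinfun (\<lambda>w. (0, (1 / \<tau>) *\<^sub>R w, 0))"
definition C_dapi :: "real^'n^'n \<Rightarrow> ((real^'n) \<times> (real^'n) \<times> (real^'n)) \<Rightarrow>\<^sub>L (real^'n)" where
  "C_dapi S = Blinfun (\<lambda>(\<theta>, \<omega>, \<Omega>). S *v \<theta>)"

definition H2sq_dapi :: "real^'n^'n \<Rightarrow> real \<Rightarrow> real \<Rightarrow> real \<Rightarrow> real \<Rightarrow> real \<Rightarrow> real" where
  "H2sq_dapi W \<alpha> m \<tau> k \<gamma> =
     H2_sq (A_dapi (laplacian W) m \<tau> k \<gamma>) (B_dapi \<tau>) (C_dapi (psd_sqrt (\<alpha> *\<^sub>R laplacian W)))"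

definition phi :: "real \<Rightarrow> real \<Rightarrow> real \<Rightarrow> real \<Rightarrow> real \<Rightarrow> real \<Rightarrow> real" where
  "phi \<alpha> m \<tau> k \<gamma> x = \<alpha> / (2 * m) *
     (1 / (1 + (\<gamma> * \<tau> * x + k) / (\<gamma> * x * (\<gamma> * \<tau> * x + k) + k\<^sup>2 * m * x)))"

end

theory Submission
  imports Defs "HOL-Real_Asymp.Real_Asymp"
begin


typedef (overloaded) ('a::"{banach,perfect_space}") endo = "UNIV :: ('a \<Rightarrow>\<^sub>L 'a) set"
  morphisms endo_rep Endo by auto

setup_lifting type_definition_endo

instantiation endo :: ("{banach,perfect_space}") real_normed_vector
begin
lift_definition norm_endo :: "'a endo \<Rightarrow> real" is norm .
lift_definition minus_endo :: "'a endo \<Rightarrow> 'a endo \<Rightarrow> 'a endo" is "(-)" .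
lift_definition plus_endo :: "'a endo \<Rightarrow> 'a endo \<Rightarrow> 'a endo" is "(+)" .
lift_definition uminus_endo :: "'a endo \<Rightarrow> 'a endo" is "uminus" .
lift_definition zero_endo :: "'a endo" is "0" .
lift_definition scaleR_endo :: "real \<Rightarrow> 'a endo \<Rightarrow> 'a endo" is "scaleR" .
definition dist_endo :: "'a endo \<Rightarrow> 'a endo \<Rightarrow> real" where "dist_endo a b = norm (a - b)"
definition sgn_endo :: "'a endo \<Rightarrow> 'a endo" where "sgn_endo x = scaleR (inverse (norm x)) x"
definition uniformity_endo :: "('a endo \<times> 'a endo) filter"
  where "uniformity_endo = (INF e\<in>{0 <..}. principal {(x, y). dist x y < e})"
definition open_endo :: "'a endo set \<Rightarrow> bool"
  where "open_endo S = (\<forall>x\<in>S. \<forall>\<^sub>F (x', y) in uniformity. x' = x \<longrightarrow> y \<in> S)"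
instance
  apply standard
  unfolding dist_endo_def open_endo_def sgn_endo_def uniformity_endo_def
  apply (rule refl | (transfer, force simp: norm_triangle_ineq algebra_simps))+
  done
end

instantiation endo :: ("{banach,perfect_space}") real_normed_algebra_1
begin
lift_definition times_endo :: "'a endo \<Rightarrow> 'a endo \<Rightarrow> 'a endo" is "(o\<^sub>L)" .
lift_definition one_endo :: "'a endo" is "id_blinfun" .
instance
  apply standard
  apply (transfer; rule blinfun_eqI; simp add: blinfun.bilinear_simps)+
    apply (transfer, metis norm_blinfun_id norm_zero zero_neq_one)
   apply (transfer, rule norm_blinfun_compose)
  apply (transfer, simp)
  done
end

instance endo :: ("{banach,perfect_space}") banach
proof
  fix X :: "nat \<Rightarrow> 'a endo" assume "Cauchy X"
  then have "Cauchy (\<lambda>n. endo_rep (X n))"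
    unfolding Cauchy_def dist_norm by transfer
  then obtain L where "(\<lambda>n. endo_rep (X n)) \<longlonglongrightarrow> L" using Cauchy_convergent_iff convergent_def by blast
  then have "X \<longlonglongrightarrow> Endo L"
    unfolding LIMSEQ_def dist_norm by transfer (simp add: Endo_inverse)
  then show "convergent X" by (auto simp: convergent_def)
qed

lemma bounded_linear_endo_rep: "bounded_linear endo_rep"
  by (rule bounded_linear_intro[where K=1]) (transfer, simp)+

lemma endo_rep_power: "endo_rep (x ^ n) = blin_pow (endo_rep x) n"
  by (induction n) (simp_all add: blin_pow_def one_endo.rep_eq times_endo.rep_eq)

lemma blin_exp_eq: "blin_exp M = endo_rep (exp (Endo M))"
proof -
  interpret bounded_linear endo_rep by (rule bounded_linear_endo_rep)
  have "endo_rep (exp (Endo M)) = (\<Sum>n. endo_rep ((Endo M)^n /\<^sub>R fact n))"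
    unfolding exp_def by (rule suminf[OF summable_exp_generic])
  also have "\<dots> = blin_exp M"
    unfolding blin_exp_def
    by (simp add: scaleR endo_rep_power Endo_inverse divide_inverse_commute)
  finally show ?thesis by simp
qed

lemma summable_blin_exp: "summable (\<lambda>n. (1 / fact n) *\<^sub>R blin_pow (M::'a::{banach,perfect_space} \<Rightarrow>\<^sub>L 'a) n)"
proof -
  interpret bounded_linear endo_rep by (rule bounded_linear_endo_rep)
  have "summable (\<lambda>n. endo_rep ((Endo M)^n /\<^sub>R fact n))"
    by (rule summable[OF summable_exp_generic])
  then show ?thesis by (simp add: scaleR endo_rep_power Endo_inverse divide_inverse_commute)
qed

lemma blin_exp_zero: "blin_exp (0::'a::{banach,perfect_space} \<Rightarrow>\<^sub>L 'a) = id_blinfun"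
proof -
  have "Endo 0 = (0::'a endo)" by (metis zero_endo.rep_eq endo_rep_inverse)
  then show ?thesis by (simp add: blin_exp_eq one_endo.rep_eq)
qed

lemma blin_exp_deriv:
  fixes M :: "'a::{banach,perfect_space} \<Rightarrow>\<^sub>L 'a"
  shows "((\<lambda>t. blin_exp (t *\<^sub>R M)) has_vector_derivative M o\<^sub>L blin_exp (t *\<^sub>R M)) (at t within T)"
proof -
  interpret bounded_linear endo_rep by (rule bounded_linear_endo_rep)
  have e: "Endo (t *\<^sub>R M) = t *\<^sub>R Endo M" for t
    by (simp add: scaleR_endo.abs_eq)
  have "((\<lambda>t. exp (t *\<^sub>R Endo M)) has_vector_derivative Endo M * exp (t *\<^sub>R Endo M)) (at t within T)"
    using exp_scaleR_has_vector_derivative_right[of "Endo M" t T] exp_times_scaleR_commute by metis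
  from has_vector_derivative[OF this] show ?thesis
    by (simp add: blin_exp_eq e times_endo.rep_eq Endo_inverse)
qed

lemma blin_exp_apply_deriv:
  fixes M :: "'a::{banach,perfect_space} \<Rightarrow>\<^sub>L 'a"
  shows "((\<lambda>t. blin_exp (t *\<^sub>R M) x) has_vector_derivative M (blin_exp (t *\<^sub>R M) x)) (at t within T)"
  using blinfun.bounded_linear_left[THEN bounded_linear.has_vector_derivative, OF blin_exp_deriv[of M t T], of x]
  by simp

lemma blinfun_compose_assoc: "(a o\<^sub>L b) o\<^sub>L c = a o\<^sub>L (b o\<^sub>L c)"
  by (rule blinfun_eqI) simp

lemma blin_pow_intertwine:
  assumes "A o\<^sub>L E = E o\<^sub>L B"
  shows "blin_pow A n o\<^sub>L E = E o\<^sub>L blin_pow B n"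
proof (induction n)
  case 0
  show ?case by (simp add: blin_pow_def blinfun_eqI)
next
  case (Suc n)
  have "blin_pow A (Suc n) = A o\<^sub>L blin_pow A n" "blin_pow B (Suc n) = B o\<^sub>L blin_pow B n"
    by (simp_all add: blin_pow_def)
  then show ?case using Suc assms by (metis blinfun_compose_assoc)
qed

lemma blin_exp_intertwine:
  fixes A :: "'a::{banach,perfect_space} \<Rightarrow>\<^sub>L 'a" and B :: "'b::{banach,perfect_space} \<Rightarrow>\<^sub>L 'b"
  assumes "A o\<^sub>L E = E o\<^sub>L B"
  shows "blin_exp A o\<^sub>L E = E o\<^sub>L blin_exp B"
proof -
  have l: "bounded_linear (\<lambda>X. X o\<^sub>L E)" by (rule bounded_bilinear.bounded_linear_left[OF bounded_bilinear_blinfun_compose])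
  have r: "bounded_linear (\<lambda>X. E o\<^sub>L X)" by (rule bounded_bilinear.bounded_linear_right[OF bounded_bilinear_blinfun_compose])
  have "blin_exp A o\<^sub>L E = (\<Sum>n. ((1 / fact n) *\<^sub>R blin_pow A n) o\<^sub>L E)"
    unfolding blin_exp_def by (rule bounded_linear.suminf[OF l summable_blin_exp])
  also have "\<dots> = (\<Sum>n. E o\<^sub>L ((1 / fact n) *\<^sub>R blin_pow B n))"
    by (simp add: blin_pow_intertwine[OF assms] bounded_bilinear.scaleR_left[OF bounded_bilinear_blinfun_compose] bounded_bilinear.scaleR_right[OF bounded_bilinear_blinfun_compose])
  also have "\<dots> = E o\<^sub>L blin_exp B"
    unfolding blin_exp_def by (rule bounded_linear.suminf[OF r summable_blin_exp, symmetric])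
  finally show ?thesis .
qed



lemma decay_to_zero:
  fixes G G' :: "real \<Rightarrow> real"
  assumes d: "\<And>t. (G has_real_derivative G' t) (at t)"
    and le: "\<And>t. G' t \<le> - \<delta> * G t" and "\<delta> > 0" and nn: "\<And>t. G t \<ge> 0"
  shows "(G \<longlongrightarrow> 0) at_top"
proof -
  define h where "h t = G t * exp (\<delta> * t)" for t
  have hd: "(h has_real_derivative (G' t + \<delta> * G t) * exp (\<delta> * t)) (at t)" for t
    unfolding h_def by (auto intro!: derivative_eq_intros d simp: algebra_simps)
  have hle: "h t \<le> h 0" if "t \<ge> 0" for t
  proof (rule DERIV_nonpos_imp_nonincreasing[OF that])
    fix x assume "0 \<le> x" "x \<le> t"
    show "\<exists>y. DERIV h x :> y \<and> y \<le> 0"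
      using hd[of x] le[of x] by (intro exI[of _ "(G' x + \<delta> * G x) * exp (\<delta> * x)"]) (auto simp: mult_nonpos_nonneg)
  qed
  then have b: "G t \<le> G 0 * exp (- \<delta> * t)" if "t \<ge> 0" for t
  proof -
    have "G t * exp (\<delta> * t) \<le> G 0" using hle[OF that] by (simp add: h_def)
    then show ?thesis by (simp add: exp_minus field_simps)
  qed
  have "((\<lambda>t. G 0 * exp (- \<delta> * t)) \<longlongrightarrow> 0) at_top"
    using \<open>\<delta> > 0\<close> by real_asymp
  then show ?thesis
  proof (rule Lim_null_comparison[rotated])
    show "\<forall>\<^sub>F t in at_top. norm (G t) \<le> G 0 * exp (- \<delta> * t)"
      using eventually_ge_at_top[of "0::real"] by eventually_elim (use b nn in auto)
  qed
qed


lemma sq_to_zero: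
  fixes f G :: "real \<Rightarrow> real"
  assumes "(G \<longlongrightarrow> 0) at_top" "\<And>t. c * (f t)^2 \<le> G t" "c > 0"
  shows "(f \<longlongrightarrow> 0) at_top"
proof (rule Lim_null_comparison[rotated])
  show "((\<lambda>t. sqrt (G t / c)) \<longlongrightarrow> 0) at_top"
    using tendsto_real_sqrt[OF tendsto_divide_zero[OF assms(1), of c]] by simp
  show "\<forall>\<^sub>F t in at_top. norm (f t) \<le> sqrt (G t / c)"
  proof (intro always_eventually allI)
    fix t
    have "(f t)^2 \<le> G t / c" using assms(2)[of t] assms(3) by (simp add: field_simps mult.commute)
    then have "sqrt ((f t)^2) \<le> sqrt (G t / c)" by (rule real_sqrt_le_mono)
    then show "norm (f t) \<le> sqrt (G t / c)" by simp
  qed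
qed

lemma cross_bound:
  fixes mu tau p x y :: real
  assumes "mu > 0" "p^2 \<le> mu * tau"
  shows "\<bar>2 * p * x * y\<bar> \<le> mu * x^2 + tau * y^2"
proof -
  have "mu * (mu * x^2 + tau * y^2 - 2 * p * x * y) = (mu * x - p * y)^2 + (mu * tau - p^2) * y^2"
    by (simp add: power2_eq_square algebra_simps)
  also have "\<dots> \<ge> 0" using assms by (intro add_nonneg_nonneg) auto
  finally have 1: "2 * p * x * y \<le> mu * x^2 + tau * y^2" using assms by (simp add: zero_le_mult_iff)
  have "mu * (mu * x^2 + tau * y^2 + 2 * p * x * y) = (mu * x + p * y)^2 + (mu * tau - p^2) * y^2"
    by (simp add: power2_eq_square algebra_simps)
  also have "\<dots> \<ge> 0" using assms by (intro add_nonneg_nonneg) auto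
  finally have 2: "- (2 * p * x * y) \<le> mu * x^2 + tau * y^2" using assms by (simp add: zero_le_mult_iff)
  from 1 2 show ?thesis by linarith
qed

lemma sum3_le:
  fixes c X Y Z :: real
  assumes "c * X \<le> a" "c * Y \<le> b" "c * Z \<le> d"
  shows "c * (X + Y + Z) \<le> a + b + d"
  using assms by (simp add: distrib_left)

lemma dapi_decay:
  fixes mu g k tau :: real and th w W :: "real \<Rightarrow> real"
  assumes pos: "mu > 0" "g > 0" "k > 0" "tau > 0"
    and d1: "\<And>t. (th has_real_derivative w t) (at t)"
    and d2: "\<And>t. (w has_real_derivative (- mu * th t - w t + W t) / tau) (at t)"
    and d3: "\<And>t. (W has_real_derivative (- w t - g * W t) / k) (at t)"
  shows "(th \<longlongrightarrow> 0) at_top \<and> (w \<longlongrightarrow> 0) at_top \<and> (W \<longlongrightarrow> 0) at_top"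
proof -
  define e where "e = min (min (1 / (tau + 1 / mu)) (mu * g)) mu"
  have tp: "tau + 1 / mu > 0" using pos by (simp add: add_pos_pos)
  then have e0: "e > 0" using pos by (simp add: e_def)
  have "e \<le> 1 / (tau + 1 / mu)" by (simp add: e_def)
  then have "e * (tau + 1 / mu) \<le> 1 / (tau + 1 / mu) * (tau + 1 / mu)"
    using tp by (intro mult_right_mono) auto
  then have e1: "e * (tau + 1 / mu) \<le> 1" using tp by simp
  have e2: "e \<le> mu * g" "e \<le> mu" by (auto simp: e_def)
  have "e * tau \<le> e * (tau + 1 / mu)" using e0 pos by (intro mult_left_mono) auto
  then have e3: "e * tau \<le> 1" using e1 by linarith
  have q: "(e * tau)^2 \<le> mu * tau"
  proof -
    have "(e * tau)^2 = (e * tau) * (e * tau)" by (simp add: power2_eq_square)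
    also have "\<dots> \<le> 1 * (mu * tau)"
      by (rule mult_mono) (use e3 e2 e0 pos in auto)
    finally show ?thesis by simp
  qed
  define G where "G t = mu * (th t)^2 + tau * (w t)^2 + k * (W t)^2 + e * tau * th t * w t" for t
  define G' where "G' t = - 2 * (w t)^2 - 2 * g * (W t)^2
     + e * (tau * (w t)^2 - mu * (th t)^2 - th t * w t + th t * W t)" for t
  have dG: "(G has_real_derivative G' t) (at t)" for t
    unfolding G_def
    by (rule derivative_eq_intros d1 d2 d3 refl)+ (use pos in \<open>simp add: G'_def field_simps power2_eq_square\<close>)
  have cr: "\<bar>2 * (e * tau) * th t * w t\<bar> \<le> mu * (th t)^2 + tau * (w t)^2" for t
    by (rule cross_bound[OF pos(1) q])
  define c where "c = min (min (mu / 2) (tau / 2)) k"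
  have c0: "c > 0" using pos by (simp add: c_def)
  have low: "G t \<ge> c * ((th t)^2 + (w t)^2 + (W t)^2)" for t
  proof -
    have "c * ((th t)^2 + (w t)^2 + (W t)^2) \<le> (mu / 2) * (th t)^2 + (tau / 2) * (w t)^2 + k * (W t)^2"
      by (intro sum3_le mult_right_mono) (auto simp: c_def)
    moreover have "(mu / 2) * (th t)^2 + (tau / 2) * (w t)^2 + k * (W t)^2 \<le> G t"
      using cr[of t] unfolding G_def by (simp add: abs_le_iff)
    ultimately show ?thesis by linarith
  qed
  define C where "C = 2 * mu + 2 * tau + k"
  have C0: "C > 0" using pos by (simp add: C_def)
  have up: "G t \<le> C * ((th t)^2 + (w t)^2 + (W t)^2)" for t
  proof -
    have "G t \<le> (2 * mu) * (th t)^2 + (2 * tau) * (w t)^2 + k * (W t)^2"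
      using cr[of t] unfolding G_def by (simp add: abs_le_iff)
    moreover have "(2 * mu) * (th t)^2 + (2 * tau) * (w t)^2 + k * (W t)^2 \<le> C * ((th t)^2 + (w t)^2 + (W t)^2)"
      using pos unfolding C_def by (simp add: algebra_simps)
    ultimately show ?thesis by linarith
  qed
  define d0 where "d0 = min (min (e * mu / 2) 1) g"
  have d00: "d0 > 0" using e0 pos by (simp add: d0_def)
  have dec: "G' t \<le> - (d0 * ((th t)^2 + (w t)^2 + (W t)^2))" for t
  proof -
    have a1: "- (th t * w t) \<le> mu / 4 * (th t)^2 + (w t)^2 / mu"
    proof -
      have "0 \<le> (mu / 2 * th t + w t)^2 / mu" using pos by simp
      then show ?thesis using pos by (simp add: power2_eq_square field_simps)
    qed
    have a2: "th t * W t \<le> mu / 4 * (th t)^2 + (W t)^2 / mu"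
    proof -
      have "0 \<le> (mu / 2 * th t - W t)^2 / mu" using pos by simp
      then show ?thesis using pos by (simp add: power2_eq_square field_simps)
    qed
    have "e * (tau * (w t)^2 - mu * (th t)^2 - th t * w t + th t * W t)
      \<le> e * (tau * (w t)^2 - mu * (th t)^2 + (mu / 4 * (th t)^2 + (w t)^2 / mu) + (mu / 4 * (th t)^2 + (W t)^2 / mu))"
      using a1 a2 e0 by (intro mult_left_mono) auto
    also have "\<dots> = e * (tau + 1 / mu) * (w t)^2 - e * mu / 2 * (th t)^2 + (e / mu) * (W t)^2"
      using pos by (simp add: field_simps)
    also have "\<dots> \<le> 1 * (w t)^2 - e * mu / 2 * (th t)^2 + g * (W t)^2"
    proof -
      have "e * (tau + 1 / mu) * (w t)^2 \<le> 1 * (w t)^2" by (rule mult_right_mono) (use e1 in auto)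
      moreover have "(e / mu) * (W t)^2 \<le> g * (W t)^2"
        by (rule mult_right_mono) (use e2 pos in \<open>auto simp: field_simps mult.commute\<close>)
      ultimately show ?thesis by linarith
    qed
    finally have "G' t \<le> - ((w t)^2) - e * mu / 2 * (th t)^2 - g * (W t)^2"
      unfolding G'_def by simp
    moreover have "d0 * ((th t)^2 + (w t)^2 + (W t)^2) \<le> e * mu / 2 * (th t)^2 + 1 * (w t)^2 + g * (W t)^2"
      by (intro sum3_le mult_right_mono) (auto simp: d0_def)
    ultimately show ?thesis by linarith
  qed
  have dec2: "G' t \<le> - (d0 / C) * G t" for t
  proof -
    have "(d0 / C) * G t \<le> (d0 / C) * (C * ((th t)^2 + (w t)^2 + (W t)^2))"
      by (rule mult_left_mono[OF up]) (use d00 C0 in auto)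
    also have "\<dots> = d0 * ((th t)^2 + (w t)^2 + (W t)^2)" using C0 by simp
    finally show ?thesis using dec[of t] by simp
  qed
  have S0: "0 \<le> (th t)^2 + (w t)^2 + (W t)^2" for t by simp
  have Gnn: "G t \<ge> 0" for t
    using low[of t] mult_nonneg_nonneg[OF less_imp_le[OF c0] S0[of t]] by linarith
  have G0: "(G \<longlongrightarrow> 0) at_top"
    by (rule decay_to_zero[OF dG dec2 _ Gnn]) (use d00 C0 in auto)
  have "c * (th t)^2 \<le> G t" "c * (w t)^2 \<le> G t" "c * (W t)^2 \<le> G t" for t
  proof -
    have "c * (th t)^2 \<le> c * ((th t)^2 + (w t)^2 + (W t)^2)"
         "c * (w t)^2 \<le> c * ((th t)^2 + (w t)^2 + (W t)^2)"
         "c * (W t)^2 \<le> c * ((th t)^2 + (w t)^2 + (W t)^2)"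
      by (intro mult_left_mono; use c0 in simp)+
    then show "c * (th t)^2 \<le> G t" "c * (w t)^2 \<le> G t" "c * (W t)^2 \<le> G t"
      using low[of t] by linarith+
  qed
  then show ?thesis using sq_to_zero[OF G0 _ c0] by blast
qed


lemma lyap_integral:
  fixes V h :: "real \<Rightarrow> real"
  assumes dV: "\<And>t. (V has_real_derivative - h t) (at t)"
    and lim: "(V \<longlongrightarrow> 0) at_top" and nn: "\<And>t. h t \<ge> 0"
  shows "(h has_integral V 0) {0..}"
proof -
  have ftc: "(h has_integral V 0 - V y) {0..y}" if "0 \<le> y" for y
  proof -
    have "(h has_integral (- V y) - (- V 0)) {0..y}"
    proof (rule fundamental_theorem_of_calculus[OF that])
      fix x assume "x \<in> {0..y}"
      have "((\<lambda>t. - V t) has_real_derivative h x) (at x)"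
        using DERIV_minus[OF dV[of x]] by simp
      then show "((\<lambda>t. - V t) has_vector_derivative h x) (at x within {0..y})"
        by (simp add: has_real_derivative_iff_has_vector_derivative has_vector_derivative_at_within)
    qed
    then show ?thesis by simp
  qed
  show ?thesis
  proof (rule has_integral_to_inf)
    show "h integrable_on {0..y}" for y
    proof (cases "0 \<le> y")
      case True then show ?thesis using ftc by blast
    next
      case False then have "{0..y} = {}" by auto
      then show ?thesis using integrable_on_empty by metis
    qed
    have "((\<lambda>y. V 0 - V y) \<longlongrightarrow> V 0 - 0) at_top"
      by (intro tendsto_intros lim)
    then have "((\<lambda>y. V 0 - V y) \<longlongrightarrow> V 0) at_top" by simp
    moreover have "\<forall>\<^sub>F y in at_top. V 0 - V y = integral {0..y} h"
      using eventually_ge_at_top[of "0::real"]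
      by eventually_elim (use ftc integral_unique in metis)
    ultimately show "((\<lambda>y. integral {0..y} h) \<longlongrightarrow> V 0) at_top"
      by (rule Lim_transform_eventually)
    show "h y \<ge> 0" for y by (rule nn)
  qed
qed

lemma dapi_integral:
  fixes mu g k tau :: real and th w W :: "real \<Rightarrow> real"
  assumes pos: "mu > 0" "g > 0" "k > 0" "tau > 0"
    and d1: "\<And>t. (th has_real_derivative w t) (at t)"
    and d2: "\<And>t. (w has_real_derivative (- mu * th t - w t + W t) / tau) (at t)"
    and d3: "\<And>t. (W has_real_derivative (- w t - g * W t) / k) (at t)"
    and init: "th 0 = 0" "w 0 = 1" "W 0 = 0"
  shows "((\<lambda>t. (th t)^2) has_integral
     tau^2 * (k^2 * mu + g * k + g^2 * tau) / (2 * mu * (k^2 * mu + g * k + g^2 * tau + g * tau + k))) {0..}"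
proof -
  define D where "D = k^2 * mu + g * k + g^2 * tau + g * tau + k"
  have D0: "D > 0" using pos by (simp add: D_def add_pos_pos)
  define b where "b = tau / mu"
  define e where "e = b * k * (k + g * tau) / D"
  define f where "f = k * e / (2 * g * tau)"
  define d where "d = tau * (b - e / k) / 2"
  define c where "c = k * (b - mu * e) / (g * tau)"
  define a where "a = (b / tau + c / k + 2 * mu * d / tau) / 2"
  define V where "V t = a * (th t)^2 + b * th t * w t + c * th t * W t + d * (w t)^2 + e * w t * W t + f * (W t)^2" for t
  define P where "P t = (- mu * th t - w t + W t) / tau" for t
  define Q where "Q t = (- w t - g * W t) / k" for t
  have E1: "- (mu / tau) * b = -1" using pos by (simp add: b_def)
  have E2: "2 * a - b / tau - c / k - 2 * mu * d / tau = 0" by (simp add: a_def field_simps)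
  have E3: "b / tau - g * c / k - mu * e / tau = 0" using pos by (simp add: c_def field_simps)
  have E4: "b - 2 * d / tau - e / k = 0" using pos by (simp add: d_def field_simps)
  have E6: "e / tau - 2 * g * f / k = 0" using pos by (simp add: f_def field_simps)
  have E5: "c + 2 * d / tau - e / tau - g * e / k - 2 * f / k = 0"
  proof -
    have eD: "e * D = b * k * (k + g * tau)" using D0 by (simp add: e_def)
    have "g * tau * k * (c + 2 * d / tau - e / tau - g * e / k - 2 * f / k)
        = k * k * b + g * tau * k * b - e * (k^2 * mu + g * tau + g * k + g^2 * tau + k)"
      using pos by (simp add: c_def d_def f_def field_simps power2_eq_square)
    also have "\<dots> = 0" using eD by (simp add: D_def algebra_simps power2_eq_square)
    finally show ?thesis using pos by simp
  qed
  have dV: "(V has_real_derivative - ((th t)^2)) (at t)" for t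
  proof -
    have der: "(V has_real_derivative
        2 * a * th t * w t + b * ((w t)^2 + th t * P t) + c * (w t * W t + th t * Q t)
        + 2 * d * w t * P t + e * (P t * W t + w t * Q t) + 2 * f * W t * Q t) (at t)"
      unfolding V_def
      by (rule derivative_eq_intros d1 d2[folded P_def] d3[folded Q_def] refl)+
         (simp add: power2_eq_square algebra_simps)
    have "2 * a * th t * w t + b * ((w t)^2 + th t * P t) + c * (w t * W t + th t * Q t)
        + 2 * d * w t * P t + e * (P t * W t + w t * Q t) + 2 * f * W t * Q t
      = (- (mu / tau) * b) * (th t)^2 + (2 * a - b / tau - c / k - 2 * mu * d / tau) * (th t * w t)
        + (b / tau - g * c / k - mu * e / tau) * (th t * W t) + (b - 2 * d / tau - e / k) * (w t)^2
        + (c + 2 * d / tau - e / tau - g * e / k - 2 * f / k) * (w t * W t)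
        + (e / tau - 2 * g * f / k) * (W t)^2"
      using pos by (simp add: P_def Q_def field_simps power2_eq_square)
    also have "\<dots> = - ((th t)^2)" unfolding E1 E2 E3 E4 E5 E6 by simp
    finally have eq: "2 * a * th t * w t + b * ((w t)^2 + th t * P t) + c * (w t * W t + th t * Q t)
        + 2 * d * w t * P t + e * (P t * W t + w t * Q t) + 2 * f * W t * Q t = - ((th t)^2)" .
    from der show ?thesis by (simp only: eq)
  qed
  have dec: "(th \<longlongrightarrow> 0) at_top \<and> (w \<longlongrightarrow> 0) at_top \<and> (W \<longlongrightarrow> 0) at_top"
    by (rule dapi_decay[OF pos d1 d2 d3])
  have "(V \<longlongrightarrow> a * 0^2 + b * 0 * 0 + c * 0 * 0 + d * 0^2 + e * 0 * 0 + f * 0^2) at_top"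
    unfolding V_def using dec by (intro tendsto_intros) auto
  then have Vlim: "(V \<longlongrightarrow> 0) at_top" by simp
  have "((\<lambda>t. (th t)^2) has_integral V 0) {0..}"
    by (rule lyap_integral[OF dV Vlim]) simp
  moreover have "V 0 = tau^2 * (k^2 * mu + g * k + g^2 * tau) / (2 * mu * D)"
  proof -
    have "V 0 = d" by (simp add: V_def init)
    also have "\<dots> = tau^2 * (k^2 * mu + g * k + g^2 * tau) / (2 * mu * D)"
    proof -
      have 1: "e / k = b * (k + g * tau) / D" using pos by (simp add: e_def)
      have 2: "b - e / k = b * (D - (k + g * tau)) / D" unfolding 1 using D0 by (simp add: field_simps)
      have 3: "D - (k + g * tau) = k^2 * mu + g * k + g^2 * tau" by (simp add: D_def)
      show ?thesis unfolding d_def 2 3 using pos D0 by (simp add: b_def power2_eq_square)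
    qed
    finally show ?thesis .
  qed
  ultimately show ?thesis by (simp add: D_def)
qed


lemma std_decay:
  fixes mu k tau :: real and th w :: "real \<Rightarrow> real"
  assumes pos: "mu > 0" "tau > 0"
    and d1: "\<And>t. (th has_real_derivative w t) (at t)"
    and d2: "\<And>t. (w has_real_derivative (- mu * th t - w t) / tau) (at t)"
  shows "(th \<longlongrightarrow> 0) at_top \<and> (w \<longlongrightarrow> 0) at_top"
proof -
  define e where "e = min (1 / (tau + 1 / mu)) mu"
  have tp: "tau + 1 / mu > 0" using pos by (simp add: add_pos_pos)
  then have e0: "e > 0" using pos by (simp add: e_def)
  have "e \<le> 1 / (tau + 1 / mu)" by (simp add: e_def)
  then have "e * (tau + 1 / mu) \<le> 1 / (tau + 1 / mu) * (tau + 1 / mu)"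
    using tp by (intro mult_right_mono) auto
  then have e1: "e * (tau + 1 / mu) \<le> 1" using tp by simp
  have e2: "e \<le> mu" by (auto simp: e_def)
  have "e * tau \<le> e * (tau + 1 / mu)" using e0 pos by (intro mult_left_mono) auto
  then have e3: "e * tau \<le> 1" using e1 by linarith
  have q: "(e * tau)^2 \<le> mu * tau"
  proof -
    have "(e * tau)^2 = (e * tau) * (e * tau)" by (simp add: power2_eq_square)
    also have "\<dots> \<le> 1 * (mu * tau)"
      by (rule mult_mono) (use e3 e2 e0 pos in auto)
    finally show ?thesis by simp
  qed
  define G where "G t = mu * (th t)^2 + tau * (w t)^2 + e * tau * th t * w t" for t
  define G' where "G' t = - 2 * (w t)^2 + e * (tau * (w t)^2 - mu * (th t)^2 - th t * w t)" for t
  have dG: "(G has_real_derivative G' t) (at t)" for t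
    unfolding G_def
    by (rule derivative_eq_intros d1 d2 refl)+ (use pos in \<open>simp add: G'_def field_simps power2_eq_square\<close>)
  have cr: "\<bar>2 * (e * tau) * th t * w t\<bar> \<le> mu * (th t)^2 + tau * (w t)^2" for t
    by (rule cross_bound[OF pos(1) q])
  define c where "c = min (mu / 2) (tau / 2)"
  have c0: "c > 0" using pos by (simp add: c_def)
  have low: "G t \<ge> c * ((th t)^2 + (w t)^2 + 0)" for t
  proof -
    have "c * ((th t)^2 + (w t)^2 + 0) \<le> (mu / 2) * (th t)^2 + (tau / 2) * (w t)^2 + 0"
      by (intro sum3_le mult_right_mono) (auto simp: c_def)
    moreover have "(mu / 2) * (th t)^2 + (tau / 2) * (w t)^2 + 0 \<le> G t"
      using cr[of t] unfolding G_def by (simp add: abs_le_iff)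
    ultimately show ?thesis by linarith
  qed
  define C where "C = 2 * mu + 2 * tau"
  have C0: "C > 0" using pos by (simp add: C_def)
  have up: "G t \<le> C * ((th t)^2 + (w t)^2)" for t
  proof -
    have "G t \<le> (2 * mu) * (th t)^2 + (2 * tau) * (w t)^2"
      using cr[of t] unfolding G_def by (simp add: abs_le_iff)
    moreover have "(2 * mu) * (th t)^2 + (2 * tau) * (w t)^2 \<le> C * ((th t)^2 + (w t)^2)"
      using pos unfolding C_def by (simp add: algebra_simps)
    ultimately show ?thesis by linarith
  qed
  define d0 where "d0 = min (e * mu / 2) 1"
  have d00: "d0 > 0" using e0 pos by (simp add: d0_def)
  have dec: "G' t \<le> - (d0 * ((th t)^2 + (w t)^2 + 0))" for t
  proof -
    have a1: "- (th t * w t) \<le> mu / 4 * (th t)^2 + (w t)^2 / mu"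
    proof -
      have "0 \<le> (mu / 2 * th t + w t)^2 / mu" using pos by simp
      then show ?thesis using pos by (simp add: power2_eq_square field_simps)
    qed
    have "e * (tau * (w t)^2 - mu * (th t)^2 - th t * w t)
      \<le> e * (tau * (w t)^2 - mu * (th t)^2 + (mu / 4 * (th t)^2 + (w t)^2 / mu))"
      using a1 e0 by (intro mult_left_mono) auto
    also have "\<dots> = e * (tau + 1 / mu) * (w t)^2 - e * mu * 3 / 4 * (th t)^2"
      using pos by (simp add: field_simps)
    also have "\<dots> \<le> 1 * (w t)^2 - e * mu / 2 * (th t)^2"
    proof -
      have "e * (tau + 1 / mu) * (w t)^2 \<le> 1 * (w t)^2" by (rule mult_right_mono) (use e1 in auto)
      moreover have "e * mu / 2 * (th t)^2 \<le> e * mu * 3 / 4 * (th t)^2"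
        by (rule mult_right_mono) (use e0 pos in auto)
      ultimately show ?thesis by linarith
    qed
    finally have "G' t \<le> - ((w t)^2) - e * mu / 2 * (th t)^2"
      unfolding G'_def by simp
    moreover have "d0 * ((th t)^2 + (w t)^2 + 0) \<le> e * mu / 2 * (th t)^2 + 1 * (w t)^2 + 0"
      by (intro sum3_le mult_right_mono) (auto simp: d0_def)
    ultimately show ?thesis by linarith
  qed
  have dec2: "G' t \<le> - (d0 / C) * G t" for t
  proof -
    have "(d0 / C) * G t \<le> (d0 / C) * (C * ((th t)^2 + (w t)^2))"
      by (rule mult_left_mono[OF up]) (use d00 C0 in auto)
    also have "\<dots> = d0 * ((th t)^2 + (w t)^2 + 0)" using C0 by simp
    finally show ?thesis using dec[of t] by simp
  qed
  have S0: "0 \<le> (th t)^2 + (w t)^2 + 0" for t by simp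
  have Gnn: "G t \<ge> 0" for t
    using low[of t] mult_nonneg_nonneg[OF less_imp_le[OF c0] S0[of t]] by linarith
  have G0: "(G \<longlongrightarrow> 0) at_top"
    by (rule decay_to_zero[OF dG dec2 _ Gnn]) (use d00 C0 in auto)
  have "c * (th t)^2 \<le> G t" "c * (w t)^2 \<le> G t" for t
  proof -
    have "c * (th t)^2 \<le> c * ((th t)^2 + (w t)^2 + 0)"
         "c * (w t)^2 \<le> c * ((th t)^2 + (w t)^2 + 0)"
      by (intro mult_left_mono; use c0 in simp)+
    then show "c * (th t)^2 \<le> G t" "c * (w t)^2 \<le> G t"
      using low[of t] by linarith+
  qed
  then show ?thesis using sq_to_zero[OF G0 _ c0] by blast
qed

lemma std_integral:
  fixes mu tau :: real and th w :: "real \<Rightarrow> real"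
  assumes pos: "mu > 0" "tau > 0"
    and d1: "\<And>t. (th has_real_derivative w t) (at t)"
    and d2: "\<And>t. (w has_real_derivative (- mu * th t - w t) / tau) (at t)"
    and init: "th 0 = 0" "w 0 = 1"
  shows "((\<lambda>t. (th t)^2) has_integral tau^2 / (2 * mu)) {0..}"
proof -
  define b where "b = tau / mu"
  define d where "d = tau * b / 2"
  define a where "a = (b / tau + 2 * mu * d / tau) / 2"
  define V where "V t = a * (th t)^2 + b * th t * w t + d * (w t)^2" for t
  define P where "P t = (- mu * th t - w t) / tau" for t
  have E1: "- (mu / tau) * b = -1" using pos by (simp add: b_def)
  have E2: "2 * a - b / tau - 2 * mu * d / tau = 0" by (simp add: a_def field_simps)
  have E4: "b - 2 * d / tau = 0" using pos by (simp add: d_def field_simps)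
  have dV: "(V has_real_derivative - ((th t)^2)) (at t)" for t
  proof -
    have der: "(V has_real_derivative
        2 * a * th t * w t + b * ((w t)^2 + th t * P t) + 2 * d * w t * P t) (at t)"
      unfolding V_def
      by (rule derivative_eq_intros d1 d2[folded P_def] refl)+
         (simp add: power2_eq_square algebra_simps)
    have "2 * a * th t * w t + b * ((w t)^2 + th t * P t) + 2 * d * w t * P t
      = (- (mu / tau) * b) * (th t)^2 + (2 * a - b / tau - 2 * mu * d / tau) * (th t * w t)
        + (b - 2 * d / tau) * (w t)^2"
      using pos by (simp add: P_def field_simps power2_eq_square)
    also have "\<dots> = - ((th t)^2)" unfolding E1 E2 E4 by simp
    finally have eq: "2 * a * th t * w t + b * ((w t)^2 + th t * P t) + 2 * d * w t * P t = - ((th t)^2)" .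
    from der show ?thesis by (simp only: eq)
  qed
  have dec: "(th \<longlongrightarrow> 0) at_top \<and> (w \<longlongrightarrow> 0) at_top"
    by (rule std_decay[OF pos d1 d2])
  have "(V \<longlongrightarrow> a * 0^2 + b * 0 * 0 + d * 0^2) at_top"
    unfolding V_def using dec by (intro tendsto_intros) auto
  then have Vlim: "(V \<longlongrightarrow> 0) at_top" by simp
  have "((\<lambda>t. (th t)^2) has_integral V 0) {0..}"
    by (rule lyap_integral[OF dV Vlim]) simp
  moreover have "V 0 = tau^2 / (2 * mu)"
    using pos by (simp add: V_def init d_def b_def power2_eq_square)
  ultimately show ?thesis by simp
qed



definition onb :: "(nat \<Rightarrow> real^'n) \<Rightarrow> bool" where
  "onb v \<longleftrightarrow> (\<forall>i\<in>{1..CARD('n)}. \<forall>j\<in>{1..CARD('n)}. v i \<bullet> v j = (if i = j then 1 else 0))"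

lemma onb_expand:
  fixes v :: "nat \<Rightarrow> real^'n"
  assumes "onb v"
  shows "x = (\<Sum>i\<in>{1..CARD('n)}. (v i \<bullet> x) *\<^sub>R v i)"
proof -
  let ?I = "{1..CARD('n)}"
  have vv: "v i \<bullet> v j = (if i = j then 1 else 0)" if "i \<in> ?I" "j \<in> ?I" for i j
    using assms that unfolding onb_def by blast
  have inj: "inj_on v ?I"
  proof (rule inj_onI)
    fix i j assume ij: "i \<in> ?I" "j \<in> ?I" "v i = v j"
    show "i = j"
    proof (rule ccontr)
      assume "i \<noteq> j"
      then have "v i \<bullet> v j = 0" using vv[OF ij(1,2)] by simp
      moreover have "v i \<bullet> v i = 1" using vv[OF ij(1) ij(1)] by simp
      ultimately show False using ij(3) by simp
    qed
  qed
  let ?S = "v ` ?I"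
  have po: "pairwise orthogonal ?S"
    unfolding pairwise_def orthogonal_def using vv by fastforce
  have nz: "0 \<notin> ?S"
  proof
    assume "0 \<in> ?S" then obtain i where "i \<in> ?I" "v i = 0" by auto
    then show False using vv[of i i] by simp
  qed
  have ind: "independent ?S" by (rule pairwise_orthogonal_independent[OF po nz])
  have cS: "card ?S = CARD('n)" using card_image[OF inj] by simp
  have "dim ?S = card ?S"
    using ind dim_eq_card_independent by blast
  then have "dim ?S = DIM(real^'n)" using cS by simp
  then have sp: "span ?S = UNIV" using dim_eq_full by blast
  define y where "y = x - (\<Sum>i\<in>?I. (v i \<bullet> x) *\<^sub>R v i)"
  have yo: "v j \<bullet> y = 0" if "j \<in> ?I" for j
  proof -
    have "v j \<bullet> (\<Sum>i\<in>?I. (v i \<bullet> x) *\<^sub>R v i) = (\<Sum>i\<in>?I. (v i \<bullet> x) * (v j \<bullet> v i))"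
      by (simp add: inner_sum_right)
    also have "\<dots> = (\<Sum>i\<in>?I. if i = j then v i \<bullet> x else 0)"
      by (rule sum.cong) (use vv that in auto)
    also have "\<dots> = v j \<bullet> x" using that by simp
    finally show ?thesis by (simp add: y_def inner_diff_right)
  qed
  have "orthogonal y y"
    by (rule orthogonal_to_span[where S="?S"]) (use sp yo in \<open>auto simp: orthogonal_def inner_commute\<close>)
  then have "y = 0" by (simp add: orthogonal_def)
  then show ?thesis by (simp add: y_def)
qed

lemma onb_inner_sum:
  fixes v :: "nat \<Rightarrow> real^'n"
  assumes onb: "onb v" and "i \<in> {1..CARD('n)}"
  shows "v i \<bullet> (\<Sum>j\<in>{1..CARD('n)}. c j *\<^sub>R v j) = c i"
proof -
  have "v i \<bullet> (\<Sum>j\<in>{1..CARD('n)}. c j *\<^sub>R v j) = (\<Sum>j\<in>{1..CARD('n)}. c j * (v i \<bullet> v j))"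
    by (simp add: inner_sum_right)
  also have "\<dots> = (\<Sum>j\<in>{1..CARD('n)}. if j = i then c j else 0)"
    by (rule sum.cong) (use onb assms(2) in \<open>auto simp: onb_def\<close>)
  also have "\<dots> = c i" using assms(2) by simp
  finally show ?thesis .
qed

lemma onb_parseval:
  fixes v :: "nat \<Rightarrow> real^'n"
  assumes onb: "onb v"
  shows "x \<bullet> y = (\<Sum>i\<in>{1..CARD('n)}. (v i \<bullet> x) * (v i \<bullet> y))"
proof -
  have "x \<bullet> y = (\<Sum>i\<in>{1..CARD('n)}. (v i \<bullet> x) *\<^sub>R v i) \<bullet> y"
    using onb_expand[OF onb, of x] by simp
  also have "\<dots> = (\<Sum>i\<in>{1..CARD('n)}. (v i \<bullet> x) * (v i \<bullet> y))"
    by (simp add: inner_sum_left)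
  finally show ?thesis .
qed

lemma sym_matrix_inner:
  fixes M :: "real^'n^'n"
  assumes "transpose M = M"
  shows "(M *v x) \<bullet> y = x \<bullet> (M *v y)"
proof -
  have "M *v x = x v* M" using transpose_matrix_vector[of M x] assms by simp
  then show ?thesis by (simp add: dot_lmul_matrix)
qed


lemma lap_apply:
  fixes W :: "real^'n^'n"
  assumes diag: "\<And>i. W$i$i = 0"
  shows "(laplacian W *v x) $ i = (\<Sum>j\<in>UNIV. W$i$j * (x$i - x$j))"
proof -
  have "(laplacian W *v x) $ i = (\<Sum>j\<in>UNIV. laplacian W $ i $ j * x $ j)"
    by (simp add: matrix_vector_mult_def)
  also have "\<dots> = laplacian W $ i $ i * x $ i + (\<Sum>j\<in>UNIV - {i}. laplacian W $ i $ j * x $ j)"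
    by (simp add: sum.remove[of UNIV i])
  also have "\<dots> = (\<Sum>k\<in>UNIV - {i}. W$i$k) * x $ i + (\<Sum>j\<in>UNIV - {i}. - W $ i $ j * x $ j)"
    by (simp add: laplacian_def)
  also have "\<dots> = (\<Sum>j\<in>UNIV - {i}. W$i$j * (x$i - x$j))"
    by (simp add: sum_distrib_right sum_distrib_left sum_subtractf[symmetric] algebra_simps sum.distrib[symmetric] sum_negf)
  also have "\<dots> = (\<Sum>j\<in>UNIV. W$i$j * (x$i - x$j))"
    by (simp add: sum.remove[of UNIV i] diag)
  finally show ?thesis .
qed

lemma lap_symmetric:
  assumes "\<And>i j. W$i$j = W$j$i"
  shows "transpose (laplacian W) = laplacian W"
  using assms by (simp add: vec_eq_iff transpose_def laplacian_def)

lemma lap_quad: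
  fixes W :: "real^'n^'n"
  assumes diag: "\<And>i. W$i$i = 0" and sym: "\<And>i j. W$i$j = W$j$i"
  shows "x \<bullet> (laplacian W *v x) = (\<Sum>i\<in>UNIV. \<Sum>j\<in>UNIV. W$i$j * (x$i - x$j)^2) / 2"
proof -
  define S where "S = (\<Sum>i\<in>UNIV. \<Sum>j\<in>UNIV. W$i$j * (x$i * (x$i - x$j)))"
  have 1: "x \<bullet> (laplacian W *v x) = S"
    by (simp add: inner_vec_def lap_apply[OF diag] S_def sum_distrib_left algebra_simps)
  have "S = (\<Sum>j\<in>UNIV. \<Sum>i\<in>UNIV. W$i$j * (x$i * (x$i - x$j)))"
    unfolding S_def by (rule sum.swap)
  also have "\<dots> = (\<Sum>i\<in>UNIV. \<Sum>j\<in>UNIV. W$i$j * (x$j * (x$j - x$i)))"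
    by (simp add: sym)
  finally have 2: "S = \<dots>" .
  have "2 * S = (\<Sum>i\<in>UNIV. \<Sum>j\<in>UNIV. W$i$j * (x$i * (x$i - x$j))) + (\<Sum>i\<in>UNIV. \<Sum>j\<in>UNIV. W$i$j * (x$j * (x$j - x$i)))"
    using 2 by (simp add: S_def)
  also have "\<dots> = (\<Sum>i\<in>UNIV. \<Sum>j\<in>UNIV. W$i$j * (x$i - x$j)^2)"
    by (simp add: sum.distrib[symmetric] power2_eq_square algebra_simps)
  finally show ?thesis using 1 by simp
qed

lemma lap_psd:
  fixes W :: "real^'n^'n"
  assumes "weighted_connected_graph W"
  shows "x \<bullet> (laplacian W *v x) \<ge> 0"
proof -
  have d: "\<And>i. W$i$i = 0" and s: "\<And>i j. W$i$j = W$j$i" and nn: "\<And>i j. W$i$j \<ge> 0"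
    using assms by (auto simp: weighted_connected_graph_def)
  show ?thesis unfolding lap_quad[OF d s] by (intro divide_nonneg_pos sum_nonneg mult_nonneg_nonneg nn) auto
qed

lemma lap_kernel:
  fixes W :: "real^'n^'n"
  assumes g: "weighted_connected_graph W" and z: "x \<bullet> (laplacian W *v x) = 0"
  shows "x$a = x$b"
proof -
  have d: "\<And>i. W$i$i = 0" and s: "\<And>i j. W$i$j = W$j$i" and nn: "\<And>i j. W$i$j \<ge> 0"
    and conn: "\<And>i j. (i, j) \<in> {(a, b). W$a$b > 0}\<^sup>*"
    using g by (auto simp: weighted_connected_graph_def)
  have "(\<Sum>i\<in>UNIV. \<Sum>j\<in>UNIV. W$i$j * (x$i - x$j)^2) = 0"
    using z unfolding lap_quad[OF d s] by simp
  then have "\<forall>i\<in>UNIV. (\<Sum>j\<in>UNIV. W$i$j * (x$i - x$j)^2) = 0"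
    by (subst (asm) sum_nonneg_eq_0_iff) (auto intro!: sum_nonneg mult_nonneg_nonneg nn)
  then have z2: "W$i$j * (x$i - x$j)^2 = 0" for i j
    by (subst (asm) sum_nonneg_eq_0_iff) (auto intro!: mult_nonneg_nonneg nn)
  have edge: "x$i = x$j" if "W$i$j > 0" for i j
    using z2[of i j] that by simp
  have "(a, b) \<in> {(a, b). W$a$b > 0}\<^sup>*" by (rule conn)
  then show ?thesis
  proof (induction rule: rtrancl_induct)
    case base show ?case by simp
  next
    case (step y z) then show ?case using edge by auto
  qed
qed

lemma lap_ones:
  fixes W :: "real^'n^'n"
  assumes "\<And>i. W$i$i = 0"
  shows "laplacian W *v (1::real^'n) = 0"
  by (simp add: vec_eq_iff lap_apply[OF assms])


lemma eig_facts:
  fixes W :: "real^'n^'n" and v :: "nat \<Rightarrow> real^'n" and lam :: "nat \<Rightarrow> real"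
  assumes g: "weighted_connected_graph W" and onb: "onb v"
    and ev: "\<And>i. i \<in> {1..CARD('n)} \<Longrightarrow> laplacian W *v v i = lam i *\<^sub>R v i"
    and sorted: "\<And>i j. 1 \<le> i \<Longrightarrow> i \<le> j \<Longrightarrow> j \<le> CARD('n) \<Longrightarrow> lam i \<le> lam j"
  shows "lam 1 = 0" "\<And>i. i \<in> {2..CARD('n)} \<Longrightarrow> lam i > 0" "\<And>i. i \<in> {1..CARD('n)} \<Longrightarrow> lam i \<ge> 0"
proof -
  let ?I = "{1..CARD('n)}"
  let ?L = "laplacian W"
  have d: "\<And>i. W$i$i = 0" and s: "\<And>i j. W$i$j = W$j$i"
    using g by (auto simp: weighted_connected_graph_def)
  have vv: "v i \<bullet> v j = (if i = j then 1 else 0)" if "i \<in> ?I" "j \<in> ?I" for i j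
    using onb that unfolding onb_def by blast
  have lq: "lam i = v i \<bullet> (?L *v v i)" if "i \<in> ?I" for i
    using ev[OF that] vv[OF that that] by simp
  show nn: "lam i \<ge> 0" if "i \<in> ?I" for i
    using lq[OF that] lap_psd[OF g] by simp
  have const: "v i $ a = v i $ b" if "i \<in> ?I" "lam i = 0" for i a b
    by (rule lap_kernel[OF g]) (use lq[OF that(1)] that(2) in simp)
  have constv: "\<exists>c. v i = vec c" if "i \<in> ?I" "lam i = 0" for i
    by (rule exI[of _ "v i $ undefined"]) (use const[OF that] in \<open>simp add: vec_eq_iff\<close>)
  have uniq: "i = j" if h: "i \<in> ?I" "j \<in> ?I" "lam i = 0" "lam j = 0" for i j
  proof (rule ccontr)
    assume "i \<noteq> j"
    obtain ci where ci: "v i = vec ci" using constv[OF h(1,3)] by blast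
    obtain cj where cj: "v j = vec cj" using constv[OF h(2,4)] by blast
    have "real CARD('n) * (ci * cj) = 0" using vv[OF h(1,2)] \<open>i \<noteq> j\<close> by (simp add: ci cj inner_vec_def)
    moreover have "real CARD('n) * (ci * ci) = 1" using vv[OF h(1,1)] by (simp add: ci inner_vec_def)
    moreover have "real CARD('n) * (cj * cj) = 1" using vv[OF h(2,2)] by (simp add: cj inner_vec_def)
    ultimately show False by auto
  qed
  have ex: "\<exists>i\<in>?I. lam i = 0"
  proof (rule ccontr)
    assume "\<not> ?thesis"
    then have pos: "lam i \<noteq> 0" if "i \<in> ?I" for i using that by blast
    have "v j \<bullet> (1::real^'n) = 0" if "j \<in> ?I" for j
    proof -
      have "0 = v j \<bullet> (?L *v 1)" by (simp add: lap_ones[OF d])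
      also have "\<dots> = (?L *v v j) \<bullet> 1" by (simp add: sym_matrix_inner[OF lap_symmetric[OF s]])
      also have "\<dots> = lam j * (v j \<bullet> 1)" by (simp add: ev[OF that])
      finally show ?thesis using pos[OF that] by simp
    qed
    then have "(1::real^'n) \<bullet> 1 = 0" using onb_parseval[OF onb, of 1 1] by simp
    moreover have "(1::real^'n) \<bullet> 1 = real CARD('n)" by (simp add: inner_vec_def)
    ultimately show False by simp
  qed
  then obtain i0 where i0: "i0 \<in> ?I" "lam i0 = 0" by blast
  have one: "1 \<in> ?I" by simp
  have "lam 1 \<le> lam i0" using sorted[of 1 i0] i0 by auto
  then show l1: "lam 1 = 0" using nn[OF one] i0 by simp
  show "lam i > 0" if "i \<in> {2..CARD('n)}" for i
  proof -
    have iI: "i \<in> ?I" using that by auto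
    have "lam i \<noteq> 0" using uniq[OF iI one _ l1] that by auto
    then show ?thesis using nn[OF iI] by simp
  qed
qed


lemma matrix_onb_apply:
  fixes M :: "real^'n^'n" and v :: "nat \<Rightarrow> real^'n"
  assumes onb: "onb v" and ev: "\<And>i. i \<in> {1..CARD('n)} \<Longrightarrow> M *v v i = mu i *\<^sub>R v i"
  shows "M *v x = (\<Sum>i\<in>{1..CARD('n)}. (mu i * (v i \<bullet> x)) *\<^sub>R v i)"
proof -
  have "M *v x = M *v (\<Sum>i\<in>{1..CARD('n)}. (v i \<bullet> x) *\<^sub>R v i)"
    using onb_expand[OF onb, of x] by simp
  also have "\<dots> = (\<Sum>i\<in>{1..CARD('n)}. (mu i * (v i \<bullet> x)) *\<^sub>R v i)"
    by (simp add: vec.sum matrix_vector_mult_scaleR ev mult.commute)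
  finally show ?thesis .
qed

lemma sqrt_eig_any:
  fixes M S :: "real^'n^'n" and u :: "real^'n"
  assumes St: "transpose S = S" and Sp: "\<And>x. x \<bullet> (S *v x) \<ge> 0" and SS: "S ** S = M"
    and eu: "M *v u = m *\<^sub>R u" and m0: "m \<ge> 0"
  shows "S *v u = sqrt m *\<^sub>R u"
proof (cases "m = 0")
  case True
  have "(S *v u) \<bullet> (S *v u) = u \<bullet> (S *v (S *v u))" by (rule sym_matrix_inner[OF St])
  also have "\<dots> = u \<bullet> (M *v u)" by (simp add: matrix_vector_mul_assoc SS)
  also have "\<dots> = 0" using eu True by simp
  finally show ?thesis using True by simp
next
  case False
  then have mp: "m > 0" using m0 by simp
  define r where "r = sqrt m"
  have r0: "r > 0" using mp by (simp add: r_def)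
  define w where "w = S *v u - r *\<^sub>R u"
  have "S *v w + r *\<^sub>R w = S *v (S *v u) - r *\<^sub>R (r *\<^sub>R u)"
    by (simp add: w_def matrix_vector_mult_diff_distrib matrix_vector_mult_scaleR algebra_simps)
  also have "\<dots> = 0" using eu mp by (simp add: matrix_vector_mul_assoc SS r_def)
  finally have Sw: "S *v w = - r *\<^sub>R w" by (simp add: eq_neg_iff_add_eq_0)
  have "0 \<le> w \<bullet> (S *v w)" by (rule Sp)
  also have "\<dots> = - r * (w \<bullet> w)" by (simp add: Sw)
  finally have "w \<bullet> w \<le> 0" using r0 by (simp add: mult_le_0_iff)
  then have "w = 0" by (metis inner_ge_zero inner_eq_zero_iff order_antisym)
  then show ?thesis by (simp add: w_def r_def)
qed

lemma psd_sqrt_eig: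
  fixes M :: "real^'n^'n" and v :: "nat \<Rightarrow> real^'n"
  assumes onb: "onb v" and ev: "\<And>i. i \<in> {1..CARD('n)} \<Longrightarrow> M *v v i = mu i *\<^sub>R v i"
    and nn: "\<And>i. i \<in> {1..CARD('n)} \<Longrightarrow> mu i \<ge> 0"
  shows "\<And>i. i \<in> {1..CARD('n)} \<Longrightarrow> psd_sqrt M *v v i = sqrt (mu i) *\<^sub>R v i"
proof -
  let ?I = "{1..CARD('n)}"
  let ?P = "\<lambda>S::real^'n^'n. transpose S = S \<and> (\<forall>x. x \<bullet> (S *v x) \<ge> 0) \<and> S ** S = M"
  define S0 :: "real^'n^'n" where "S0 = (\<chi> a b. \<Sum>i\<in>?I. sqrt (mu i) * (v i $ a) * (v i $ b))"
  have S0v: "S0 *v x = (\<Sum>i\<in>?I. (sqrt (mu i) * (v i \<bullet> x)) *\<^sub>R v i)" for x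
  proof -
    have "(S0 *v x) $ a = (\<Sum>i\<in>?I. ((sqrt (mu i) * (v i \<bullet> x)) *\<^sub>R v i) $ a)" for a
    proof -
      have "(S0 *v x) $ a = (\<Sum>b\<in>UNIV. \<Sum>i\<in>?I. sqrt (mu i) * (v i $ a) * (v i $ b) * x $ b)"
        by (simp add: S0_def matrix_vector_mult_def sum_distrib_right)
      also have "\<dots> = (\<Sum>i\<in>?I. \<Sum>b\<in>UNIV. sqrt (mu i) * (v i $ a) * (v i $ b) * x $ b)"
        by (rule sum.swap)
      also have "\<dots> = (\<Sum>i\<in>?I. ((sqrt (mu i) * (v i \<bullet> x)) *\<^sub>R v i) $ a)"
        by (simp add: inner_vec_def sum_distrib_left mult_ac)
      finally show ?thesis .
    qed
    then show ?thesis by (simp add: vec_eq_iff sum_component)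
  qed
  have PS0: "?P S0"
  proof (intro conjI allI)
    show "transpose S0 = S0" by (simp add: S0_def transpose_def vec_eq_iff mult_ac)
    fix x
    have "x \<bullet> (S0 *v x) = (\<Sum>i\<in>?I. sqrt (mu i) * (v i \<bullet> x)^2)"
      by (simp add: S0v inner_sum_right power2_eq_square inner_commute mult_ac)
    also have "\<dots> \<ge> 0" using nn by (intro sum_nonneg) auto
    finally show "x \<bullet> (S0 *v x) \<ge> 0" .
  next
    show "S0 ** S0 = M"
    proof (subst matrix_eq, intro allI)
      fix x
      have "(S0 ** S0) *v x = S0 *v (S0 *v x)" by (simp add: matrix_vector_mul_assoc)
      also have "\<dots> = (\<Sum>i\<in>?I. (sqrt (mu i) * (v i \<bullet> (S0 *v x))) *\<^sub>R v i)" by (rule S0v)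
      also have "\<dots> = (\<Sum>i\<in>?I. (mu i * (v i \<bullet> x)) *\<^sub>R v i)"
      proof (rule sum.cong[OF refl])
        fix i assume i: "i \<in> ?I"
        have "v i \<bullet> (S0 *v x) = sqrt (mu i) * (v i \<bullet> x)"
          unfolding S0v by (rule onb_inner_sum[OF onb i])
        then show "(sqrt (mu i) * (v i \<bullet> (S0 *v x))) *\<^sub>R v i = (mu i * (v i \<bullet> x)) *\<^sub>R v i"
          using nn[OF i] by (simp add: mult.assoc[symmetric])
      qed
      also have "\<dots> = M *v x" by (rule matrix_onb_apply[OF onb ev, symmetric])
      finally show "(S0 ** S0) *v x = M *v x" .
    qed
  qed
  have any: "S *v v i = sqrt (mu i) *\<^sub>R v i" if "?P S" "i \<in> ?I" for S i
    using sqrt_eig_any[of S M "v i" "mu i"] that ev nn by blast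
  have "\<exists>!S. ?P S"
  proof (rule ex1I[of _ S0])
    show "?P S0" by (rule PS0)
    fix S assume PS: "?P S"
    show "S = S0"
    proof (subst matrix_eq, intro allI)
      fix x
      have "S *v x = S *v (\<Sum>i\<in>?I. (v i \<bullet> x) *\<^sub>R v i)" using onb_expand[OF onb, of x] by simp
      also have "\<dots> = (\<Sum>i\<in>?I. (v i \<bullet> x) *\<^sub>R (S *v v i))" by (simp add: vec.sum matrix_vector_mult_scaleR)
      also have "\<dots> = (\<Sum>i\<in>?I. (v i \<bullet> x) *\<^sub>R (S0 *v v i))"
        by (rule sum.cong[OF refl]) (simp add: any[OF PS] any[OF PS0])
      also have "\<dots> = S0 *v (\<Sum>i\<in>?I. (v i \<bullet> x) *\<^sub>R v i)" by (simp add: vec.sum matrix_vector_mult_scaleR)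
      also have "\<dots> = S0 *v x" using onb_expand[OF onb, of x] by simp
      finally show "S *v x = S0 *v x" .
    qed
  qed
  then have "?P (psd_sqrt M)" unfolding psd_sqrt_def by (rule theI')
  then show "psd_sqrt M *v v i = sqrt (mu i) *\<^sub>R v i" if "i \<in> ?I" for i
    using any that by blast
qed


lemma trace_modal:
  fixes F :: "real^'n \<Rightarrow> real^'n" and v :: "nat \<Rightarrow> real^'n"
  assumes onb: "onb v" and F: "\<And>x. F x = (\<Sum>i\<in>{1..CARD('n)}. (\<kappa> i * (v i \<bullet> x)) *\<^sub>R v i)"
  shows "lin_trace (F \<circ> adjoint F) = (\<Sum>i\<in>{1..CARD('n)}. (\<kappa> i)^2)"
proof -
  let ?I = "{1..CARD('n)}"
  have vi: "v i \<bullet> F x = \<kappa> i * (v i \<bullet> x)" if "i \<in> ?I" for i x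
    unfolding F by (rule onb_inner_sum[OF onb that])
  have "adjoint F = F"
  proof (rule adjoint_unique, intro allI)
    fix x y
    have "F x \<bullet> y = (\<Sum>i\<in>?I. (v i \<bullet> F x) * (v i \<bullet> y))" by (rule onb_parseval[OF onb])
    also have "\<dots> = (\<Sum>i\<in>?I. (v i \<bullet> x) * (v i \<bullet> F y))"
      by (rule sum.cong[OF refl]) (simp add: vi)
    also have "\<dots> = x \<bullet> F y" by (rule onb_parseval[OF onb, symmetric])
    finally show "F x \<bullet> y = x \<bullet> F y" .
  qed
  then have "lin_trace (F \<circ> adjoint F) = (\<Sum>b\<in>Basis. b \<bullet> F (F b))"
    by (simp add: lin_trace_def)
  also have "\<dots> = (\<Sum>b\<in>Basis. \<Sum>i\<in>?I. (\<kappa> i)^2 * ((v i \<bullet> b) * (v i \<bullet> b)))"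
  proof (rule sum.cong[OF refl])
    fix b :: "real^'n"
    have "b \<bullet> F (F b) = (\<Sum>i\<in>?I. (\<kappa> i * (v i \<bullet> F b)) * (b \<bullet> v i))"
      unfolding F[of "F b"] by (simp add: inner_sum_right)
    also have "\<dots> = (\<Sum>i\<in>?I. (\<kappa> i)^2 * ((v i \<bullet> b) * (v i \<bullet> b)))"
    proof (rule sum.cong[OF refl])
      fix i assume i: "i \<in> ?I"
      have c: "b \<bullet> v i = v i \<bullet> b" by (rule inner_commute)
      show "(\<kappa> i * (v i \<bullet> F b)) * (b \<bullet> v i) = (\<kappa> i)^2 * ((v i \<bullet> b) * (v i \<bullet> b))"
        unfolding vi[OF i] c by (simp add: power2_eq_square mult_ac)
    qed
    finally show "b \<bullet> F (F b) = \<dots>" .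
  qed
  also have "\<dots> = (\<Sum>i\<in>?I. (\<kappa> i)^2 * (\<Sum>b\<in>Basis. (v i \<bullet> b) * (v i \<bullet> b)))"
    by (subst sum.swap) (simp add: sum_distrib_left)
  also have "\<dots> = (\<Sum>i\<in>?I. (\<kappa> i)^2)"
  proof (rule sum.cong[OF refl])
    fix i assume i: "i \<in> ?I"
    have "(\<Sum>b\<in>Basis. (v i \<bullet> b) * (v i \<bullet> b)) = v i \<bullet> v i" by (simp add: euclidean_inner[symmetric])
    also have "\<dots> = 1" using onb i by (simp add: onb_def)
    finally show "(\<kappa> i)^2 * (\<Sum>b\<in>Basis. (v i \<bullet> b) * (v i \<bullet> b)) = (\<kappa> i)^2" by simp
  qed
  finally show ?thesis .
qed

lemma H2_modal:
  fixes A :: "'s::euclidean_space \<Rightarrow>\<^sub>L 's" and B :: "(real^'n) \<Rightarrow>\<^sub>L 's" and C :: "'s \<Rightarrow>\<^sub>L (real^'n)"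
    and v :: "nat \<Rightarrow> real^'n"
  assumes onb: "onb v"
    and rep: "\<And>t x. blinfun_apply (C o\<^sub>L blin_exp (t *\<^sub>R A) o\<^sub>L B) x
                  = (\<Sum>i\<in>{1..CARD('n)}. (\<kappa> i t * (v i \<bullet> x)) *\<^sub>R v i)"
    and int: "\<And>i. i \<in> {1..CARD('n)} \<Longrightarrow> ((\<lambda>t. (\<kappa> i t)^2) has_integral r i) {0..}"
  shows "H2_sq A B C = (\<Sum>i\<in>{1..CARD('n)}. r i)"
proof -
  have eq: "lin_trace (blinfun_apply (C o\<^sub>L blin_exp (t *\<^sub>R A) o\<^sub>L B)
                     \<circ> adjoint (blinfun_apply (C o\<^sub>L blin_exp (t *\<^sub>R A) o\<^sub>L B)))
        = (\<Sum>i\<in>{1..CARD('n)}. (\<kappa> i t)^2)" for t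
    by (rule trace_modal[OF onb]) (rule rep)
  have "((\<lambda>t. \<Sum>i\<in>{1..CARD('n)}. (\<kappa> i t)^2) has_integral (\<Sum>i\<in>{1..CARD('n)}. r i)) {0..}"
    by (rule has_integral_sum) (auto intro: int)
  then show ?thesis unfolding H2_sq_def eq by (rule integral_unique)
qed



type_synonym 'n st3 = "(real^'n) \<times> (real^'n) \<times> (real^'n)"

definition fA_dapi :: "real^'n^'n \<Rightarrow> real \<Rightarrow> real \<Rightarrow> real \<Rightarrow> real \<Rightarrow> 'n st3 \<Rightarrow> 'n st3" where
  "fA_dapi L m \<tau> k \<gamma> = (\<lambda>(\<theta>, \<omega>, \<Omega>).
     (\<omega>,
      - (m / \<tau>) *\<^sub>R (L *v \<theta>) - (1 / \<tau>) *\<^sub>R \<omega> + (1 / \<tau>) *\<^sub>R \<Omega>,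
      - (1 / k) *\<^sub>R \<omega> - (\<gamma> / k) *\<^sub>R (L *v \<Omega>)))"

lemma A_dapi_apply: "blinfun_apply (A_dapi L m \<tau> k \<gamma>) = fA_dapi L m \<tau> k \<gamma>"
proof -
  have "linear (fA_dapi L m \<tau> k \<gamma>)"
    by (rule linearI) (auto simp: fA_dapi_def matrix_vector_right_distrib matrix_vector_mult_scaleR algebra_simps)
  then show ?thesis unfolding A_dapi_def fA_dapi_def
    by (simp add: bounded_linear_Blinfun_apply linear_conv_bounded_linear)
qed

lemma B_dapi_apply: "blinfun_apply (B_dapi \<tau>) x = (0, (1 / \<tau>) *\<^sub>R x, (0::real^'n))"
proof -
  have "linear (\<lambda>w::real^'n. (0::real^'n, (1 / \<tau>) *\<^sub>R w, 0::real^'n))"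
    by (rule linearI) (auto simp: algebra_simps)
  then show ?thesis unfolding B_dapi_def
    by (simp add: bounded_linear_Blinfun_apply linear_conv_bounded_linear)
qed

lemma C_dapi_apply: "blinfun_apply (C_dapi S) (a, b, c) = S *v (a::real^'n)"
proof -
  have e: "(\<lambda>(\<theta>, \<omega>, \<Omega>). S *v \<theta>) = (\<lambda>p::'n st3. S *v fst p)" by (auto simp: fun_eq_iff)
  have "linear (\<lambda>p::'n st3. S *v fst p)"
    by (rule linearI) (auto simp: matrix_vector_right_distrib matrix_vector_mult_scaleR)
  then show ?thesis unfolding C_dapi_def e
    by (simp add: bounded_linear_Blinfun_apply linear_conv_bounded_linear)
qed


type_synonym r3 = "real \<times> real \<times> real"

definition fMsD :: "real \<Rightarrow> real \<Rightarrow> real \<Rightarrow> real \<Rightarrow> real \<Rightarrow> r3 \<Rightarrow> r3" where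
  "fMsD m \<tau> k \<gamma> lam = (\<lambda>p. (fst (snd p),
      - (m / \<tau>) * lam * fst p - (1 / \<tau>) * fst (snd p) + (1 / \<tau>) * snd (snd p),
      - (1 / k) * fst (snd p) - (\<gamma> / k) * lam * snd (snd p)))"

definition MsD :: "real \<Rightarrow> real \<Rightarrow> real \<Rightarrow> real \<Rightarrow> real \<Rightarrow> r3 \<Rightarrow>\<^sub>L r3" where
  "MsD m \<tau> k \<gamma> lam = Blinfun (fMsD m \<tau> k \<gamma> lam)"

definition EmbD :: "real^'n \<Rightarrow> r3 \<Rightarrow>\<^sub>L 'n st3" where
  "EmbD v = Blinfun (\<lambda>p. (fst p *\<^sub>R v, fst (snd p) *\<^sub>R v, snd (snd p) *\<^sub>R v))"

lemma MsD_apply: "blinfun_apply (MsD m \<tau> k \<gamma> lam) = fMsD m \<tau> k \<gamma> lam"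
proof -
  have "linear (fMsD m \<tau> k \<gamma> lam)"
    by (rule linearI) (auto simp: fMsD_def algebra_simps add_divide_distrib)
  then show ?thesis unfolding MsD_def
    by (simp add: bounded_linear_Blinfun_apply linear_conv_bounded_linear)
qed

lemma EmbD_apply: "blinfun_apply (EmbD v) p = (fst p *\<^sub>R v, fst (snd p) *\<^sub>R v, snd (snd p) *\<^sub>R v)"
proof -
  have "linear (\<lambda>p::r3. (fst p *\<^sub>R v, fst (snd p) *\<^sub>R v, snd (snd p) *\<^sub>R v))"
    by (rule linearI) (auto simp: algebra_simps)
  then show ?thesis unfolding EmbD_def
    by (simp add: bounded_linear_Blinfun_apply linear_conv_bounded_linear)
qed

lemma dapi_intertwine:
  assumes ev: "L *v v = lam *\<^sub>R v"
  shows "A_dapi L m \<tau> k \<gamma> o\<^sub>L EmbD v = EmbD v o\<^sub>L MsD m \<tau> k \<gamma> lam"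
proof (rule blinfun_eqI)
  fix p :: r3
  obtain x y z where p: "p = (x, y, z)" by (cases p) auto
  show "blinfun_apply (A_dapi L m \<tau> k \<gamma> o\<^sub>L EmbD v) p = blinfun_apply (EmbD v o\<^sub>L MsD m \<tau> k \<gamma> lam) p"
    by (simp add: p A_dapi_apply EmbD_apply MsD_apply fA_dapi_def fMsD_def
        matrix_vector_mult_scaleR ev algebra_simps)
qed

lemma compose_scaleR_both:
  assumes "A o\<^sub>L E = E o\<^sub>L M"
  shows "(t *\<^sub>R A) o\<^sub>L E = E o\<^sub>L (t *\<^sub>R M)"
  using assms by (metis bounded_bilinear.scaleR_left bounded_bilinear.scaleR_right bounded_bilinear_blinfun_compose)

definition sD :: "real \<Rightarrow> real \<Rightarrow> real \<Rightarrow> real \<Rightarrow> real \<Rightarrow> real \<Rightarrow> r3" where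
  "sD m \<tau> k \<gamma> lam t = blinfun_apply (blin_exp (t *\<^sub>R MsD m \<tau> k \<gamma> lam)) (0, 1, 0)"

lemma sD_integral:
  assumes "m > 0" "\<tau> > 0" "k > 0" "\<gamma> > 0" "lam > 0"
  shows "((\<lambda>t. (fst (sD m \<tau> k \<gamma> lam t))^2) has_integral
     \<tau>^2 * (k^2 * (m * lam) + (\<gamma> * lam) * k + (\<gamma> * lam)^2 * \<tau>)
       / (2 * (m * lam) * (k^2 * (m * lam) + (\<gamma> * lam) * k + (\<gamma> * lam)^2 * \<tau> + (\<gamma> * lam) * \<tau> + k))) {0..}"
proof -
  let ?s = "sD m \<tau> k \<gamma> lam"
  have ds: "(?s has_vector_derivative fMsD m \<tau> k \<gamma> lam (?s t)) (at t)" for t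
    unfolding sD_def using blin_exp_apply_deriv[where M="MsD m \<tau> k \<gamma> lam" and t=t and T=UNIV and x="(0, 1, 0)"]
    by (simp add: MsD_apply)
  have d1: "((\<lambda>t. fst (?s t)) has_real_derivative fst (snd (?s t))) (at t)" for t
    using bounded_linear.has_vector_derivative[OF bounded_linear_fst ds[of t]]
    by (simp add: has_real_derivative_iff_has_vector_derivative fMsD_def)
  have d2: "((\<lambda>t. fst (snd (?s t))) has_real_derivative
      (- (m * lam) * fst (?s t) - fst (snd (?s t)) + snd (snd (?s t))) / \<tau>) (at t)" for t
  proof -
    have "((\<lambda>t. fst (snd (?s t))) has_vector_derivative fst (snd (fMsD m \<tau> k \<gamma> lam (?s t)))) (at t)"
      using bounded_linear.has_vector_derivative[OF bounded_linear_compose[OF bounded_linear_fst bounded_linear_snd] ds[of t]]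
      by (simp add: o_def)
    then show ?thesis using assms
      by (simp add: has_real_derivative_iff_has_vector_derivative fMsD_def field_simps)
  qed
  have d3: "((\<lambda>t. snd (snd (?s t))) has_real_derivative
      (- fst (snd (?s t)) - (\<gamma> * lam) * snd (snd (?s t))) / k) (at t)" for t
  proof -
    have "((\<lambda>t. snd (snd (?s t))) has_vector_derivative snd (snd (fMsD m \<tau> k \<gamma> lam (?s t)))) (at t)"
      using bounded_linear.has_vector_derivative[OF bounded_linear_compose[OF bounded_linear_snd bounded_linear_snd] ds[of t]]
      by (simp add: o_def)
    then show ?thesis using assms
      by (simp add: has_real_derivative_iff_has_vector_derivative fMsD_def field_simps)
  qed
  have s0: "?s 0 = (0, 1, 0)" by (simp add: sD_def blin_exp_zero)
  show ?thesis
    by (rule dapi_integral[OF _ _ _ _ d1 d2 d3]) (use assms s0 in auto)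
qed


lemma dapi_rep:
  fixes L S :: "real^'n^'n" and v :: "nat \<Rightarrow> real^'n"
  assumes onb: "onb v"
    and ev: "\<And>i. i \<in> {1..CARD('n)} \<Longrightarrow> L *v v i = lam i *\<^sub>R v i"
    and Sv: "\<And>i. i \<in> {1..CARD('n)} \<Longrightarrow> S *v v i = sq i *\<^sub>R v i"
  shows "blinfun_apply (C_dapi S o\<^sub>L blin_exp (t *\<^sub>R A_dapi L m \<tau> k \<gamma>) o\<^sub>L B_dapi \<tau>) x
     = (\<Sum>i\<in>{1..CARD('n)}. ((sq i / \<tau> * fst (sD m \<tau> k \<gamma> (lam i) t)) * (v i \<bullet> x)) *\<^sub>R v i)"
proof -
  let ?I = "{1..CARD('n)}"
  let ?E = "blin_exp (t *\<^sub>R A_dapi L m \<tau> k \<gamma>)"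
  have comm: "blinfun_apply ?E (blinfun_apply (EmbD (v i)) p) = blinfun_apply (EmbD (v i)) (blinfun_apply (blin_exp (t *\<^sub>R MsD m \<tau> k \<gamma> (lam i))) p)"
    if "i \<in> ?I" for i p
  proof -
    have "?E o\<^sub>L EmbD (v i) = EmbD (v i) o\<^sub>L blin_exp (t *\<^sub>R MsD m \<tau> k \<gamma> (lam i))"
      by (rule blin_exp_intertwine[OF compose_scaleR_both[OF dapi_intertwine[OF ev[OF that]]]])
    from arg_cong[where f="\<lambda>X. blinfun_apply X p", OF this] show ?thesis by simp
  qed
  have Bx: "blinfun_apply (B_dapi \<tau>) x = (\<Sum>i\<in>?I. ((v i \<bullet> x) / \<tau>) *\<^sub>R blinfun_apply (EmbD (v i)) (0, 1, 0))"
  proof -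
    have "(1 / \<tau>) *\<^sub>R x = (\<Sum>i\<in>?I. ((v i \<bullet> x) / \<tau>) *\<^sub>R v i)"
    proof -
      have "(1 / \<tau>) *\<^sub>R x = (1 / \<tau>) *\<^sub>R (\<Sum>i\<in>?I. (v i \<bullet> x) *\<^sub>R v i)"
        using onb_expand[OF onb, of x] by simp
      also have "\<dots> = (\<Sum>i\<in>?I. ((v i \<bullet> x) / \<tau>) *\<^sub>R v i)"
        by (simp add: scaleR_sum_right)
      finally show ?thesis .
    qed
    then show ?thesis by (simp add: B_dapi_apply EmbD_apply prod_eq_iff fst_sum snd_sum)
  qed
  have "blinfun_apply (C_dapi S o\<^sub>L ?E o\<^sub>L B_dapi \<tau>) x
      = blinfun_apply (C_dapi S) (\<Sum>i\<in>?I. ((v i \<bullet> x) / \<tau>) *\<^sub>R blinfun_apply ?E (blinfun_apply (EmbD (v i)) (0, 1, 0)))"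
    by (simp add: Bx blinfun.sum_right blinfun.scaleR_right)
  also have "\<dots> = blinfun_apply (C_dapi S) (\<Sum>i\<in>?I. ((v i \<bullet> x) / \<tau>) *\<^sub>R blinfun_apply (EmbD (v i)) (sD m \<tau> k \<gamma> (lam i) t))"
    by (rule arg_cong[where f="blinfun_apply (C_dapi S)"], rule sum.cong[OF refl]) (simp add: comm sD_def)
  also have "\<dots> = (\<Sum>i\<in>?I. ((v i \<bullet> x) / \<tau>) *\<^sub>R blinfun_apply (C_dapi S) (blinfun_apply (EmbD (v i)) (sD m \<tau> k \<gamma> (lam i) t)))"
    by (simp add: blinfun.sum_right blinfun.scaleR_right)
  also have "\<dots> = (\<Sum>i\<in>?I. ((sq i / \<tau> * fst (sD m \<tau> k \<gamma> (lam i) t)) * (v i \<bullet> x)) *\<^sub>R v i)"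
  proof (rule sum.cong[OF refl])
    fix i assume i: "i \<in> ?I"
    obtain a b c where abc: "sD m \<tau> k \<gamma> (lam i) t = (a, b, c)" by (cases "sD m \<tau> k \<gamma> (lam i) t") auto
    show "((v i \<bullet> x) / \<tau>) *\<^sub>R blinfun_apply (C_dapi S) (blinfun_apply (EmbD (v i)) (sD m \<tau> k \<gamma> (lam i) t))
        = ((sq i / \<tau> * fst (sD m \<tau> k \<gamma> (lam i) t)) * (v i \<bullet> x)) *\<^sub>R v i"
      by (simp add: abc EmbD_apply C_dapi_apply matrix_vector_mult_scaleR Sv[OF i])
  qed
  finally show ?thesis .
qed


type_synonym 'n st2 = "(real^'n) \<times> (real^'n)"
type_synonym r2 = "real \<times> real"

definition fA_std :: "real^'n^'n \<Rightarrow> real \<Rightarrow> real \<Rightarrow> 'n st2 \<Rightarrow> 'n st2" where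
  "fA_std L m \<tau> = (\<lambda>(\<theta>, \<omega>). (\<omega>, - (m / \<tau>) *\<^sub>R (L *v \<theta>) - (1 / \<tau>) *\<^sub>R \<omega>))"

lemma A_std_apply: "blinfun_apply (A_std L m \<tau>) = fA_std L m \<tau>"
proof -
  have "linear (fA_std L m \<tau>)"
    by (rule linearI) (auto simp: fA_std_def matrix_vector_right_distrib matrix_vector_mult_scaleR algebra_simps)
  then show ?thesis unfolding A_std_def fA_std_def
    by (simp add: bounded_linear_Blinfun_apply linear_conv_bounded_linear)
qed

lemma B_std_apply: "blinfun_apply (B_std \<tau>) x = (0, (1 / \<tau>) *\<^sub>R x :: real^'n)"
proof -
  have "linear (\<lambda>w::real^'n. (0::real^'n, (1 / \<tau>) *\<^sub>R w))"
    by (rule linearI) (auto simp: algebra_simps)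
  then show ?thesis unfolding B_std_def
    by (simp add: bounded_linear_Blinfun_apply linear_conv_bounded_linear)
qed

lemma C_std_apply: "blinfun_apply (C_std S) (a, b) = S *v (a::real^'n)"
proof -
  have e: "(\<lambda>(\<theta>, \<omega>). S *v \<theta>) = (\<lambda>p::'n st2. S *v fst p)" by (auto simp: fun_eq_iff)
  have "linear (\<lambda>p::'n st2. S *v fst p)"
    by (rule linearI) (auto simp: matrix_vector_right_distrib matrix_vector_mult_scaleR)
  then show ?thesis unfolding C_std_def e
    by (simp add: bounded_linear_Blinfun_apply linear_conv_bounded_linear)
qed

definition fMsS :: "real \<Rightarrow> real \<Rightarrow> real \<Rightarrow> r2 \<Rightarrow> r2" where
  "fMsS m \<tau> lam = (\<lambda>p. (snd p, - (m / \<tau>) * lam * fst p - (1 / \<tau>) * snd p))"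

definition MsS :: "real \<Rightarrow> real \<Rightarrow> real \<Rightarrow> r2 \<Rightarrow>\<^sub>L r2" where
  "MsS m \<tau> lam = Blinfun (fMsS m \<tau> lam)"

definition EmbS :: "real^'n \<Rightarrow> r2 \<Rightarrow>\<^sub>L 'n st2" where
  "EmbS v = Blinfun (\<lambda>p. (fst p *\<^sub>R v, snd p *\<^sub>R v))"

lemma MsS_apply: "blinfun_apply (MsS m \<tau> lam) = fMsS m \<tau> lam"
proof -
  have "linear (fMsS m \<tau> lam)"
    by (rule linearI) (auto simp: fMsS_def algebra_simps add_divide_distrib)
  then show ?thesis unfolding MsS_def
    by (simp add: bounded_linear_Blinfun_apply linear_conv_bounded_linear)
qed

lemma EmbS_apply: "blinfun_apply (EmbS v) p = (fst p *\<^sub>R v, snd p *\<^sub>R v)"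
proof -
  have "linear (\<lambda>p::r2. (fst p *\<^sub>R v, snd p *\<^sub>R v))"
    by (rule linearI) (auto simp: algebra_simps)
  then show ?thesis unfolding EmbS_def
    by (simp add: bounded_linear_Blinfun_apply linear_conv_bounded_linear)
qed

lemma std_intertwine:
  assumes ev: "L *v v = lam *\<^sub>R v"
  shows "A_std L m \<tau> o\<^sub>L EmbS v = EmbS v o\<^sub>L MsS m \<tau> lam"
proof (rule blinfun_eqI)
  fix p :: r2
  obtain x y where p: "p = (x, y)" by (cases p) auto
  show "blinfun_apply (A_std L m \<tau> o\<^sub>L EmbS v) p = blinfun_apply (EmbS v o\<^sub>L MsS m \<tau> lam) p"
    by (simp add: p A_std_apply EmbS_apply MsS_apply fA_std_def fMsS_def
        matrix_vector_mult_scaleR ev algebra_simps)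
qed

definition sS :: "real \<Rightarrow> real \<Rightarrow> real \<Rightarrow> real \<Rightarrow> r2" where
  "sS m \<tau> lam t = blinfun_apply (blin_exp (t *\<^sub>R MsS m \<tau> lam)) (0, 1)"

lemma sS_integral:
  assumes "m > 0" "\<tau> > 0" "lam > 0"
  shows "((\<lambda>t. (fst (sS m \<tau> lam t))^2) has_integral \<tau>^2 / (2 * (m * lam))) {0..}"
proof -
  let ?s = "sS m \<tau> lam"
  have ds: "(?s has_vector_derivative fMsS m \<tau> lam (?s t)) (at t)" for t
    unfolding sS_def using blin_exp_apply_deriv[where M="MsS m \<tau> lam" and t=t and T=UNIV and x="(0, 1)"]
    by (simp add: MsS_apply)
  have d1: "((\<lambda>t. fst (?s t)) has_real_derivative snd (?s t)) (at t)" for t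
    using bounded_linear.has_vector_derivative[OF bounded_linear_fst ds[of t]]
    by (simp add: has_real_derivative_iff_has_vector_derivative fMsS_def)
  have d2: "((\<lambda>t. snd (?s t)) has_real_derivative
      (- (m * lam) * fst (?s t) - snd (?s t)) / \<tau>) (at t)" for t
  proof -
    have "((\<lambda>t. snd (?s t)) has_vector_derivative snd (fMsS m \<tau> lam (?s t))) (at t)"
      using bounded_linear.has_vector_derivative[OF bounded_linear_snd ds[of t]] by simp
    then show ?thesis using assms
      by (simp add: has_real_derivative_iff_has_vector_derivative fMsS_def field_simps)
  qed
  have s0: "?s 0 = (0, 1)" by (simp add: sS_def blin_exp_zero)
  show ?thesis
    by (rule std_integral[OF _ _ d1 d2]) (use assms s0 in auto)
qed

lemma std_rep:
  fixes L S :: "real^'n^'n" and v :: "nat \<Rightarrow> real^'n"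
  assumes onb: "onb v"
    and ev: "\<And>i. i \<in> {1..CARD('n)} \<Longrightarrow> L *v v i = lam i *\<^sub>R v i"
    and Sv: "\<And>i. i \<in> {1..CARD('n)} \<Longrightarrow> S *v v i = sq i *\<^sub>R v i"
  shows "blinfun_apply (C_std S o\<^sub>L blin_exp (t *\<^sub>R A_std L m \<tau>) o\<^sub>L B_std \<tau>) x
     = (\<Sum>i\<in>{1..CARD('n)}. ((sq i / \<tau> * fst (sS m \<tau> (lam i) t)) * (v i \<bullet> x)) *\<^sub>R v i)"
proof -
  let ?I = "{1..CARD('n)}"
  let ?E = "blin_exp (t *\<^sub>R A_std L m \<tau>)"
  have comm: "blinfun_apply ?E (blinfun_apply (EmbS (v i)) p) = blinfun_apply (EmbS (v i)) (blinfun_apply (blin_exp (t *\<^sub>R MsS m \<tau> (lam i))) p)"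
    if "i \<in> ?I" for i p
  proof -
    have "?E o\<^sub>L EmbS (v i) = EmbS (v i) o\<^sub>L blin_exp (t *\<^sub>R MsS m \<tau> (lam i))"
      by (rule blin_exp_intertwine[OF compose_scaleR_both[OF std_intertwine[OF ev[OF that]]]])
    from arg_cong[where f="\<lambda>X. blinfun_apply X p", OF this] show ?thesis by simp
  qed
  have Bx: "blinfun_apply (B_std \<tau>) x = (\<Sum>i\<in>?I. ((v i \<bullet> x) / \<tau>) *\<^sub>R blinfun_apply (EmbS (v i)) (0, 1))"
  proof -
    have "(1 / \<tau>) *\<^sub>R x = (\<Sum>i\<in>?I. ((v i \<bullet> x) / \<tau>) *\<^sub>R v i)"
    proof -
      have "(1 / \<tau>) *\<^sub>R x = (1 / \<tau>) *\<^sub>R (\<Sum>i\<in>?I. (v i \<bullet> x) *\<^sub>R v i)"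
        using onb_expand[OF onb, of x] by simp
      also have "\<dots> = (\<Sum>i\<in>?I. ((v i \<bullet> x) / \<tau>) *\<^sub>R v i)"
        by (simp add: scaleR_sum_right)
      finally show ?thesis .
    qed
    then show ?thesis by (simp add: B_std_apply EmbS_apply prod_eq_iff fst_sum snd_sum)
  qed
  have "blinfun_apply (C_std S o\<^sub>L ?E o\<^sub>L B_std \<tau>) x
      = blinfun_apply (C_std S) (\<Sum>i\<in>?I. ((v i \<bullet> x) / \<tau>) *\<^sub>R blinfun_apply ?E (blinfun_apply (EmbS (v i)) (0, 1)))"
    by (simp add: Bx blinfun.sum_right blinfun.scaleR_right)
  also have "\<dots> = blinfun_apply (C_std S) (\<Sum>i\<in>?I. ((v i \<bullet> x) / \<tau>) *\<^sub>R blinfun_apply (EmbS (v i)) (sS m \<tau> (lam i) t))"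
    by (rule arg_cong[where f="blinfun_apply (C_std S)"], rule sum.cong[OF refl]) (simp add: comm sS_def)
  also have "\<dots> = (\<Sum>i\<in>?I. ((v i \<bullet> x) / \<tau>) *\<^sub>R blinfun_apply (C_std S) (blinfun_apply (EmbS (v i)) (sS m \<tau> (lam i) t)))"
    by (simp add: blinfun.sum_right blinfun.scaleR_right)
  also have "\<dots> = (\<Sum>i\<in>?I. ((sq i / \<tau> * fst (sS m \<tau> (lam i) t)) * (v i \<bullet> x)) *\<^sub>R v i)"
  proof (rule sum.cong[OF refl])
    fix i assume i: "i \<in> ?I"
    obtain a b where ab: "sS m \<tau> (lam i) t = (a, b)" by (cases "sS m \<tau> (lam i) t") auto
    show "((v i \<bullet> x) / \<tau>) *\<^sub>R blinfun_apply (C_std S) (blinfun_apply (EmbS (v i)) (sS m \<tau> (lam i) t))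
        = ((sq i / \<tau> * fst (sS m \<tau> (lam i) t)) * (v i \<bullet> x)) *\<^sub>R v i"
      by (simp add: ab EmbS_apply C_std_apply matrix_vector_mult_scaleR Sv[OF i])
  qed
  finally show ?thesis .
qed



lemma phi_strict_mono:
  fixes \<alpha> m \<tau> k \<gamma> :: real
  assumes "\<alpha> > 0" "m > 0" "\<tau> > 0" "k > 0" "\<gamma> > 0"
  shows "strict_mono_on {0<..} (phi \<alpha> m \<tau> k \<gamma>)"
proof (rule strict_mono_onI)
  fix x y :: real assume x: "x \<in> {0<..}" and y: "y \<in> {0<..}" and xy: "x < y"
  from x y have x0: "x > 0" and y0: "y > 0" by auto
  define D where "D z = \<gamma> * \<tau> * z + k" for z
  define N where "N z = \<gamma> * z * (\<gamma> * \<tau> * z + k) + k\<^sup>2 * m * z" for z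
  have Dp: "D z > 0" if "z > 0" for z using assms that by (simp add: D_def add_pos_pos)
  have Np: "N z > 0" if "z > 0" for z using assms that by (simp add: N_def add_pos_pos)
  have key: "D x * N y - D y * N x = (\<gamma> * D x * D y + k^3 * m) * (y - x)"
    by (simp add: D_def N_def power2_eq_square power3_eq_cube algebra_simps)
  have "(\<gamma> * D x * D y + k^3 * m) * (y - x) > 0"
    using assms Dp[OF x0] Dp[OF y0] xy by (intro mult_pos_pos add_pos_pos) auto
  then have "D y * N x < D x * N y" using key by simp
  then have lt: "D y / N y < D x / N x"
    using Np[OF x0] Np[OF y0] by (simp add: divide_less_eq less_divide_eq mult.commute mult.left_commute)
  have pos: "1 + D y / N y > 0" using Dp[OF y0] Np[OF y0] by (simp add: add_pos_nonneg)
  have "1 / (1 + D x / N x) < 1 / (1 + D y / N y)"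
    by (rule divide_strict_left_mono) (use lt pos in auto)
  then have "\<alpha> / (2 * m) * (1 / (1 + D x / N x)) < \<alpha> / (2 * m) * (1 / (1 + D y / N y))"
    using assms by (intro mult_strict_left_mono) auto
  then show "phi \<alpha> m \<tau> k \<gamma> x < phi \<alpha> m \<tau> k \<gamma> y"
    by (simp add: phi_def D_def N_def)
qed


lemma graph_data:
  fixes W :: "real^'n^'n"
  assumes g: "weighted_connected_graph W" and oe: "ordered_eigenvalues (laplacian W) lam"
    and a: "\<alpha> > 0"
  obtains v where "onb v" "\<And>i. i \<in> {1..CARD('n)} \<Longrightarrow> laplacian W *v v i = lam i *\<^sub>R v i"
    "lam 1 = 0" "\<And>i. i \<in> {2..CARD('n)} \<Longrightarrow> lam i > 0" "\<And>i. i \<in> {1..CARD('n)} \<Longrightarrow> lam i \<ge> 0"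
    "\<And>i. i \<in> {1..CARD('n)} \<Longrightarrow> psd_sqrt (\<alpha> *\<^sub>R laplacian W) *v v i = sqrt (\<alpha> * lam i) *\<^sub>R v i"
proof -
  from oe obtain v where v1: "\<forall>i\<in>{1..CARD('n)}. \<forall>j\<in>{1..CARD('n)}. v i \<bullet> v j = (if i = j then 1 else 0)"
    and v2: "\<forall>i\<in>{1..CARD('n)}. laplacian W *v v i = lam i *\<^sub>R v i"
    and srt: "\<forall>i j. 1 \<le> i \<longrightarrow> i \<le> j \<longrightarrow> j \<le> CARD('n) \<longrightarrow> lam i \<le> lam j"
    unfolding ordered_eigenvalues_def by blast
  have onb: "onb v" using v1 by (simp add: onb_def)
  have ev: "\<And>i. i \<in> {1..CARD('n)} \<Longrightarrow> laplacian W *v v i = lam i *\<^sub>R v i" using v2 by blast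
  note ef = eig_facts[OF g onb ev] srt
  have ef1: "lam 1 = 0" and ef2: "\<And>i. i \<in> {2..CARD('n)} \<Longrightarrow> lam i > 0"
    and ef3: "\<And>i. i \<in> {1..CARD('n)} \<Longrightarrow> lam i \<ge> 0"
    using eig_facts[OF g onb ev] srt by blast+
  have evM: "(\<alpha> *\<^sub>R laplacian W) *v v i = (\<alpha> * lam i) *\<^sub>R v i" if "i \<in> {1..CARD('n)}" for i
    using ev[OF that] by (simp flip: scaleR_matrix_vector_assoc)
  have sq: "psd_sqrt (\<alpha> *\<^sub>R laplacian W) *v v i = sqrt (\<alpha> * lam i) *\<^sub>R v i" if "i \<in> {1..CARD('n)}" for i
    by (rule psd_sqrt_eig[OF onb evM _ that]) (use ef3 a in auto)
  show ?thesis by (rule that[OF onb ev ef1 ef2 ef3 sq])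
qed

lemma H2_dapi_formula:
  fixes W :: "real^'n^'n"
  assumes pos: "\<alpha> > 0" "m > 0" "\<tau> > 0" "k > 0" "\<gamma> > 0"
    and g: "weighted_connected_graph W" and oe: "ordered_eigenvalues (laplacian W) lam"
  shows "H2sq_dapi W \<alpha> m \<tau> k \<gamma> = (\<Sum>i\<in>{2..CARD('n)}. phi \<alpha> m \<tau> k \<gamma> (lam i))"
proof -
  obtain v where onb: "onb v" and ev: "\<And>i. i \<in> {1..CARD('n)} \<Longrightarrow> laplacian W *v v i = lam i *\<^sub>R v i"
    and l1: "lam 1 = 0" and lp: "\<And>i. i \<in> {2..CARD('n)} \<Longrightarrow> lam i > 0"
    and ln: "\<And>i. i \<in> {1..CARD('n)} \<Longrightarrow> lam i \<ge> 0"
    and sq: "\<And>i. i \<in> {1..CARD('n)} \<Longrightarrow> psd_sqrt (\<alpha> *\<^sub>R laplacian W) *v v i = sqrt (\<alpha> * lam i) *\<^sub>R v i"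
    using graph_data[OF g oe pos(1)] by metis
  define r where "r x = (if x = 0 then 0 else phi \<alpha> m \<tau> k \<gamma> x)" for x
  have "H2sq_dapi W \<alpha> m \<tau> k \<gamma> = (\<Sum>i\<in>{1..CARD('n)}. r (lam i))"
    unfolding H2sq_dapi_def
  proof (rule H2_modal[OF onb])
    show "blinfun_apply (C_dapi (psd_sqrt (\<alpha> *\<^sub>R laplacian W)) o\<^sub>L blin_exp (t *\<^sub>R A_dapi (laplacian W) m \<tau> k \<gamma>) o\<^sub>L B_dapi \<tau>) x
      = (\<Sum>i\<in>{1..CARD('n)}. ((sqrt (\<alpha> * lam i) / \<tau> * fst (sD m \<tau> k \<gamma> (lam i) t)) * (v i \<bullet> x)) *\<^sub>R v i)" for t x
      by (rule dapi_rep[OF onb ev sq])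
    fix i assume i: "i \<in> {1..CARD('n)}"
    show "((\<lambda>t. (sqrt (\<alpha> * lam i) / \<tau> * fst (sD m \<tau> k \<gamma> (lam i) t))^2) has_integral r (lam i)) {0..}"
    proof (cases "lam i = 0")
      case True then show ?thesis by (simp add: r_def)
    next
      case False
      then have lpos: "lam i > 0" using ln[OF i] by simp
      let ?mu = "m * lam i" and ?g = "\<gamma> * lam i"
      let ?NN = "k^2 * ?mu + ?g * k + ?g^2 * \<tau>"
      have int: "((\<lambda>t. (\<alpha> * lam i / \<tau>^2) * (fst (sD m \<tau> k \<gamma> (lam i) t))^2) has_integral
          (\<alpha> * lam i / \<tau>^2) * (\<tau>^2 * ?NN / (2 * ?mu * (?NN + ?g * \<tau> + k)))) {0..}"
        by (rule has_integral_mult_right[OF sD_integral[OF pos(2-5) lpos]])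
      have e1: "(sqrt (\<alpha> * lam i) / \<tau> * fst (sD m \<tau> k \<gamma> (lam i) t))^2
          = (\<alpha> * lam i / \<tau>^2) * (fst (sD m \<tau> k \<gamma> (lam i) t))^2" for t
        using pos lpos by (simp add: power_mult_distrib power_divide)
      have NNp: "?NN > 0" using pos lpos by (simp add: add_pos_pos)
      have e2: "(\<alpha> * lam i / \<tau>^2) * (\<tau>^2 * ?NN / (2 * ?mu * (?NN + ?g * \<tau> + k))) = r (lam i)"
      proof -
        define NN where "NN = ?NN"
        define Dn where "Dn = ?NN + ?g * \<tau> + k"
        have NN0: "NN > 0" using NNp by (simp add: NN_def)
        have Dn0: "Dn > 0" using NNp pos lpos by (simp add: Dn_def add_pos_pos)
        have NNe: "\<gamma> * lam i * (\<gamma> * \<tau> * lam i + k) + k\<^sup>2 * m * lam i = NN"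
          by (simp add: NN_def power2_eq_square algebra_simps)
        have Dne: "NN + (\<gamma> * \<tau> * lam i + k) = Dn" by (simp add: NN_def Dn_def algebra_simps)
        have "r (lam i) = \<alpha> / (2 * m) * (1 / (1 + (\<gamma> * \<tau> * lam i + k) / NN))"
          unfolding r_def phi_def NNe using False by simp
        also have "1 + (\<gamma> * \<tau> * lam i + k) / NN = Dn / NN"
          using NN0 Dne by (simp add: field_simps)
        also have "\<alpha> / (2 * m) * (1 / (Dn / NN)) = (\<alpha> * lam i / \<tau>^2) * (\<tau>^2 * NN / (2 * ?mu * Dn))"
          using pos lpos NN0 Dn0 by (simp add: field_simps)
        finally show ?thesis by (simp add: NN_def Dn_def)
      qed
      show ?thesis using int unfolding e1 e2 .
    qed
  qed
  also have "\<dots> = r (lam 1) + (\<Sum>i\<in>{2..CARD('n)}. r (lam i))"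
    by (subst sum.atLeast_Suc_atMost) (simp_all add: Suc_leI numeral_2_eq_2)
  also have "\<dots> = (\<Sum>i\<in>{2..CARD('n)}. phi \<alpha> m \<tau> k \<gamma> (lam i))"
  proof -
    have "r (lam 1) = 0" using l1 by (simp add: r_def)
    moreover have "(\<Sum>i\<in>{2..CARD('n)}. r (lam i)) = (\<Sum>i\<in>{2..CARD('n)}. phi \<alpha> m \<tau> k \<gamma> (lam i))"
      by (rule sum.cong[OF refl]) (use lp in \<open>force simp: r_def\<close>)
    ultimately show ?thesis by simp
  qed
  finally show ?thesis .
qed

lemma H2_std_formula:
  fixes W :: "real^'n^'n"
  assumes pos: "\<alpha> > 0" "m > 0" "\<tau> > 0"
    and g: "weighted_connected_graph W" and oe: "ordered_eigenvalues (laplacian W) lam"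
  shows "H2sq_std W \<alpha> m \<tau> = \<alpha> / (2 * m) * (real CARD('n) - 1)"
proof -
  obtain v where onb: "onb v" and ev: "\<And>i. i \<in> {1..CARD('n)} \<Longrightarrow> laplacian W *v v i = lam i *\<^sub>R v i"
    and l1: "lam 1 = 0" and lp: "\<And>i. i \<in> {2..CARD('n)} \<Longrightarrow> lam i > 0"
    and ln: "\<And>i. i \<in> {1..CARD('n)} \<Longrightarrow> lam i \<ge> 0"
    and sq: "\<And>i. i \<in> {1..CARD('n)} \<Longrightarrow> psd_sqrt (\<alpha> *\<^sub>R laplacian W) *v v i = sqrt (\<alpha> * lam i) *\<^sub>R v i"
    using graph_data[OF g oe pos(1)] by metis
  define r where "r x = (if x = 0 then 0 else \<alpha> / (2 * m))" for x :: real
  have "H2sq_std W \<alpha> m \<tau> = (\<Sum>i\<in>{1..CARD('n)}. r (lam i))"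
    unfolding H2sq_std_def
  proof (rule H2_modal[OF onb])
    show "blinfun_apply (C_std (psd_sqrt (\<alpha> *\<^sub>R laplacian W)) o\<^sub>L blin_exp (t *\<^sub>R A_std (laplacian W) m \<tau>) o\<^sub>L B_std \<tau>) x
      = (\<Sum>i\<in>{1..CARD('n)}. ((sqrt (\<alpha> * lam i) / \<tau> * fst (sS m \<tau> (lam i) t)) * (v i \<bullet> x)) *\<^sub>R v i)" for t x
      by (rule std_rep[OF onb ev sq])
    fix i assume i: "i \<in> {1..CARD('n)}"
    show "((\<lambda>t. (sqrt (\<alpha> * lam i) / \<tau> * fst (sS m \<tau> (lam i) t))^2) has_integral r (lam i)) {0..}"
    proof (cases "lam i = 0")
      case True then show ?thesis by (simp add: r_def)
    next
      case False
      then have lpos: "lam i > 0" using ln[OF i] by simp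
      have int: "((\<lambda>t. (\<alpha> * lam i / \<tau>^2) * (fst (sS m \<tau> (lam i) t))^2) has_integral
          (\<alpha> * lam i / \<tau>^2) * (\<tau>^2 / (2 * (m * lam i)))) {0..}"
        by (rule has_integral_mult_right[OF sS_integral[OF pos(2,3) lpos]])
      have e1: "(sqrt (\<alpha> * lam i) / \<tau> * fst (sS m \<tau> (lam i) t))^2
          = (\<alpha> * lam i / \<tau>^2) * (fst (sS m \<tau> (lam i) t))^2" for t
        using pos lpos by (simp add: power_mult_distrib power_divide)
      have e2: "(\<alpha> * lam i / \<tau>^2) * (\<tau>^2 / (2 * (m * lam i))) = r (lam i)"
        using pos lpos False by (simp add: r_def field_simps power2_eq_square)
      show ?thesis using int unfolding e1 e2 .
    qed
  qed
  also have "\<dots> = r (lam 1) + (\<Sum>i\<in>{2..CARD('n)}. r (lam i))"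
    by (subst sum.atLeast_Suc_atMost) (simp_all add: Suc_leI numeral_2_eq_2)
  also have "\<dots> = (\<Sum>i\<in>{2..CARD('n)}. \<alpha> / (2 * m))"
  proof -
    have "r (lam 1) = 0" using l1 by (simp add: r_def)
    moreover have "(\<Sum>i\<in>{2..CARD('n)}. r (lam i)) = (\<Sum>i\<in>{2..CARD('n)}. \<alpha> / (2 * m))"
      by (rule sum.cong[OF refl]) (use lp in \<open>force simp: r_def\<close>)
    ultimately show ?thesis by simp
  qed
  also have "\<dots> = \<alpha> / (2 * m) * (real CARD('n) - 1)"
  proof -
    have "CARD('n) \<ge> 1" by (simp add: Suc_leI)
    then show ?thesis by (simp add: of_nat_diff mult.commute)
  qed
  finally show ?thesis .
qed


theorem mainTheorem3:
  fixes \<alpha> m \<tau> k \<gamma> :: real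
    and W W' :: "real^'n^'n"
    and lam lam' :: "nat \<Rightarrow> real"
  assumes "\<alpha> > 0" "m > 0" "\<tau> > 0" "k > 0" "\<gamma> > 0"
    and "weighted_connected_graph W" "weighted_connected_graph W'"
    and "ordered_eigenvalues (laplacian W) lam"
    and "ordered_eigenvalues (laplacian W') lam'"
    and "\<forall>n\<in>{1..CARD('n)}. lam n \<le> lam' n"
  shows "strict_mono_on {0<..} (phi \<alpha> m \<tau> k \<gamma>)
    \<and> H2sq_dapi W \<alpha> m \<tau> k \<gamma> \<le> H2sq_dapi W' \<alpha> m \<tau> k \<gamma>
    \<and> H2sq_std W \<alpha> m \<tau> = \<alpha> / (2 * m) * (real CARD('n) - 1)
    \<and> H2sq_std W' \<alpha> m \<tau> = \<alpha> / (2 * m) * (real CARD('n) - 1)"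
proof (intro conjI)
  have sm: "strict_mono_on {0<..} (phi \<alpha> m \<tau> k \<gamma>)"
    by (rule phi_strict_mono) (use assms in auto)
  then show "strict_mono_on {0<..} (phi \<alpha> m \<tau> k \<gamma>)" .
  obtain v where lp: "\<And>i. i \<in> {2..CARD('n)} \<Longrightarrow> lam i > 0"
    using graph_data[OF assms(6) assms(8) assms(1)] by metis
  show "H2sq_dapi W \<alpha> m \<tau> k \<gamma> \<le> H2sq_dapi W' \<alpha> m \<tau> k \<gamma>"
    unfolding H2_dapi_formula[OF assms(1-5) assms(6) assms(8)] H2_dapi_formula[OF assms(1-5) assms(7) assms(9)]
  proof (rule sum_mono)
    fix i assume i: "i \<in> {2..CARD('n)}"
    have l0: "lam i > 0" by (rule lp[OF i])
    have le: "lam i \<le> lam' i" using assms(10) i by auto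
    show "phi \<alpha> m \<tau> k \<gamma> (lam i) \<le> phi \<alpha> m \<tau> k \<gamma> (lam' i)"
    proof (cases "lam i = lam' i")
      case True then show ?thesis by simp
    next
      case False
      then have "lam i < lam' i" using le by simp
      then show ?thesis using sm l0 unfolding strict_mono_on_def by (auto intro!: less_imp_le)
    qed
  qed
  show "H2sq_std W \<alpha> m \<tau> = \<alpha> / (2 * m) * (real CARD('n) - 1)"
    by (rule H2_std_formula[OF assms(1-3) assms(6) assms(8)])
  show "H2sq_std W' \<alpha> m \<tau> = \<alpha> / (2 * m) * (real CARD('n) - 1)"
    by (rule H2_std_formula[OF assms(1-3) assms(7) assms(9)])
qed

end
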